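(* Let $d_1,d_2,d_3\ge2$. The average of the one-tangle entangling power over the unitary group $U(d_1d_2d_3)$ with respect to the Haar measure is $$\langle\varepsilon_\tau\rangle_{U}=\frac{3d_1d_2d_3+3-d_1-d_2-d_3-d_1d_2-d_1d_3-d_2d_3}{\tfrac32(d_1d_2d_3+1)}.$$
   Context: Consider $\mathcal{H}=\mathbb{C}^{d_1}\otimes\mathbb{C}^{d_2}\otimes\mathbb{C}^{d_3}$. For a bipartition of the parties into disjoint nonempty sets $A\cup B=\{1,2,3\}$ and a pure state $|\psi\rangle$, $\tau_{A|B}(|\psi\rangle)=2\big(1-\mathrm{Tr}\,(\mathrm{Tr}_B|\psi\rangle\langle\psi|)^2\big)$. The one-tangle is $\tau_1=\tfrac13(\tau_{12|3}+\tau_{13|2}+\tau_{23|1})$. The entangling power of a unitary $U$ on $\mathcal{H}$ is $\varepsilon_\tau(U)=\big\langle\tau_1(U|\psi_1\rangle|\psi_2\rangle|\psi_3\rangle)\big\rangle$, averaged over product states with each $|\psi_i\rangle$ drawn independently from the uniform measure on the unit sphere of $\mathbb{C}^{d_i}$. *)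

theory Defs
  imports "HOL-Probability.Probability"
begin

text \<open>The local dimensions are given by a function dim :: nat => nat on the party
  labels 0,1,2 (party 1,2,3 of the paper).  A vector of C^d is an extensional
  function nat => complex supported on {..<d}.  A vector of the total space
  C^(d1 d2 d3) is indexed by the flattened (Kronecker / row-major) index.\<close>

definition dims3 :: "nat \<Rightarrow> nat \<Rightarrow> nat \<Rightarrow> nat \<Rightarrow> nat" where
  "dims3 d1 d2 d3 = (\<lambda>k. if k = 0 then d1 else if k = 1 then d2 else d3)"

definition flat_idx :: "(nat \<Rightarrow> nat) \<Rightarrow> (nat \<Rightarrow> nat) \<Rightarrow> nat" where
  "flat_idx D j = j 0 * D 1 * D 2 + j 1 * D 2 + j 2"

definition vec_space :: "nat \<Rightarrow> (nat \<Rightarrow> complex) measure" where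
  "vec_space d = PiM {..<d} (\<lambda>_. borel)"

definition mat_space :: "nat \<Rightarrow> (nat \<times> nat \<Rightarrow> complex) measure" where
  "mat_space n = PiM ({..<n} \<times> {..<n}) (\<lambda>_. borel)"

definition vnorm :: "nat \<Rightarrow> (nat \<Rightarrow> complex) \<Rightarrow> real" where
  "vnorm d x = sqrt (\<Sum>i<d. (cmod (x i))\<^sup>2)"

text \<open>Uniform (normalised surface) measure on the unit sphere of C^d, realised as the
  cone measure: the image of the uniform distribution on the unit ball under
  radial projection x |-> x / |x|.\<close>
definition sphere_unif :: "nat \<Rightarrow> (nat \<Rightarrow> complex) measure" where
  "sphere_unif d =
     distr (uniform_measure (PiM {..<d} (\<lambda>_. lborel))
              {x \<in> space (PiM {..<d} (\<lambda>_. (lborel :: complex measure))). vnorm d x \<le> 1})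
           (vec_space d)
           (\<lambda>x. restrict (\<lambda>i. x i / complex_of_real (vnorm d x)) {..<d})"

definition unitary_set :: "nat \<Rightarrow> (nat \<times> nat \<Rightarrow> complex) set" where
  "unitary_set n = {U \<in> extensional ({..<n} \<times> {..<n}).
      \<forall>i<n. \<forall>j<n. (\<Sum>k<n. cnj (U (k, i)) * U (k, j)) = (if i = j then 1 else 0)}"

definition mat_mult :: "nat \<Rightarrow> (nat \<times> nat \<Rightarrow> complex) \<Rightarrow> (nat \<times> nat \<Rightarrow> complex)
                         \<Rightarrow> (nat \<times> nat \<Rightarrow> complex)" where
  "mat_mult n V U = restrict (\<lambda>(i, j). \<Sum>k<n. V (i, k) * U (k, j)) ({..<n} \<times> {..<n})"

definition is_haar_unitary :: "nat \<Rightarrow> (nat \<times> nat \<Rightarrow> complex) measure \<Rightarrow> bool" where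
  "is_haar_unitary n \<mu> \<longleftrightarrow>
     prob_space \<mu> \<and> sets \<mu> = sets (mat_space n) \<and>
     emeasure \<mu> (unitary_set n) = 1 \<and>
     (\<forall>V \<in> unitary_set n. distr \<mu> (mat_space n) (mat_mult n V) = \<mu>)"

definition mat_apply :: "nat \<Rightarrow> (nat \<times> nat \<Rightarrow> complex) \<Rightarrow> (nat \<Rightarrow> complex) \<Rightarrow> (nat \<Rightarrow> complex)" where
  "mat_apply n U x = restrict (\<lambda>i. \<Sum>k<n. U (i, k) * x k) {..<n}"

definition prod_vec3 :: "(nat \<Rightarrow> nat) \<Rightarrow> (nat \<Rightarrow> complex) \<Rightarrow> (nat \<Rightarrow> complex) \<Rightarrow> (nat \<Rightarrow> complex)
                          \<Rightarrow> (nat \<Rightarrow> complex)" where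
  "prod_vec3 D x1 x2 x3 =
     restrict (\<lambda>m. x1 (m div (D 1 * D 2)) * x2 ((m div D 2) mod D 1) * x3 (m mod D 2))
              {..<D 0 * D 1 * D 2}"

definition idx_set :: "(nat \<Rightarrow> nat) \<Rightarrow> nat set \<Rightarrow> (nat \<Rightarrow> nat) set" where
  "idx_set D K = PiE K (\<lambda>k. {..<D k})"

definition merge_idx :: "nat set \<Rightarrow> (nat \<Rightarrow> nat) \<Rightarrow> (nat \<Rightarrow> nat) \<Rightarrow> (nat \<Rightarrow> nat)" where
  "merge_idx A a b = (\<lambda>k. if k \<in> A then a k else b k)"

text \<open>Tr ((Tr_B |psi><psi|)^2) with A the kept parties and B = {0,1,2} - A;
  entries of Tr_B |psi><psi| are (a,a') |-> sum_b psi(a,b) conj(psi(a',b)).\<close>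
definition purity :: "(nat \<Rightarrow> nat) \<Rightarrow> nat set \<Rightarrow> (nat \<Rightarrow> complex) \<Rightarrow> real" where
  "purity D A \<psi> =
     (let B = {0,1,2} - A;
          \<rho> = (\<lambda>a a'. \<Sum>b \<in> idx_set D B.
                  \<psi> (flat_idx D (merge_idx A a b)) * cnj (\<psi> (flat_idx D (merge_idx A a' b))))
      in Re (\<Sum>a \<in> idx_set D A. \<Sum>a' \<in> idx_set D A. \<rho> a a' * \<rho> a' a))"

definition tangle :: "(nat \<Rightarrow> nat) \<Rightarrow> nat set \<Rightarrow> (nat \<Rightarrow> complex) \<Rightarrow> real" where
  "tangle D A \<psi> = 2 * (1 - purity D A \<psi>)"

definition one_tangle :: "(nat \<Rightarrow> nat) \<Rightarrow> (nat \<Rightarrow> complex) \<Rightarrow> real" where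
  "one_tangle D \<psi> = (tangle D {0,1} \<psi> + tangle D {0,2} \<psi> + tangle D {1,2} \<psi>) / 3"

definition entangling_power :: "nat \<Rightarrow> nat \<Rightarrow> nat \<Rightarrow> (nat \<times> nat \<Rightarrow> complex) \<Rightarrow> real" where
  "entangling_power d1 d2 d3 U =
     (\<integral>x1. (\<integral>x2. (\<integral>x3.
         one_tangle (dims3 d1 d2 d3)
           (mat_apply (d1 * d2 * d3) U (prod_vec3 (dims3 d1 d2 d3) x1 x2 x3))
       \<partial>sphere_unif d3) \<partial>sphere_unif d2) \<partial>sphere_unif d1)"

end

theory Submission
  imports Defs "HOL-Analysis.Ball_Volume"
begin


lemma Lbound:
  fixes f :: "'a \<Rightarrow> real"
  assumes "prob_space M" "AE x in M. norm (f x) \<le> C" "f \<in> borel_measurable M"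
  shows "norm (integral\<^sup>L M f) \<le> C"
proof -
  interpret prob_space M by fact
  have i: "integrable M f" using integrable_const_bound assms by blast
  have "norm (integral\<^sup>L M f) \<le> integral\<^sup>L M (\<lambda>x. norm (f x))" by (rule integral_norm_bound)
  also have "\<dots> \<le> integral\<^sup>L M (\<lambda>x. C)"
    using i assms(2) by (intro integral_mono_AE) auto
  finally show ?thesis by (simp add: prob_space)
qed

lemma Lswap:
  fixes g :: "'a \<Rightarrow> 'b \<Rightarrow> real"
  assumes "prob_space M" "prob_space N" "case_prod g \<in> borel_measurable (M \<Otimes>\<^sub>M N)"
    "AE x in M. AE y in N. norm (g x y) \<le> C"
  shows "(\<integral>x. (\<integral>y. g x y \<partial>N) \<partial>M) = (\<integral>y. (\<integral>x. g x y \<partial>M) \<partial>N)"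
proof -
  interpret M: prob_space M by fact
  interpret N: prob_space N by fact
  interpret P: pair_sigma_finite M N by unfold_locales
  interpret Q: prob_space "M \<Otimes>\<^sub>M N" by (rule prob_space_pair) unfold_locales
  have "AE z in M \<Otimes>\<^sub>M N. norm (case_prod g z) \<le> C"
    apply (rule P.AE_pair_measure)
    using assms(3,4) by auto
  then have "integrable (M \<Otimes>\<^sub>M N) (case_prod g)"
    using assms(3) Q.integrable_const_bound by blast
  from P.Fubini_integral[OF this] show ?thesis by simp
qed

lemma comp_meas[measurable]:
  "(\<lambda>x. x i) \<in> borel_measurable (PiM I (\<lambda>_. (borel :: 'b::topological_space measure)))"
proof (cases "i \<in> I")
  case True thus ?thesis by (rule measurable_component_singleton)
next
  case False
  have "(\<lambda>x. undefined :: 'b) \<in> borel_measurable (PiM I (\<lambda>_. borel))" by simp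
  moreover have "\<And>x. x \<in> space (PiM I (\<lambda>_. (borel :: 'b measure))) \<Longrightarrow> x i = undefined"
    using False by (auto simp: space_PiM PiE_def extensional_def)
  ultimately show ?thesis using measurable_cong by (smt (verit))
qed


definition wc :: "nat \<Rightarrow> (nat \<times> nat \<Rightarrow> complex) \<Rightarrow> (nat \<Rightarrow> complex) \<Rightarrow> nat \<Rightarrow> complex" where
  "wc n U v i = (\<Sum>k<n. U (i,k) * v k)"

lemma comp_meas2[measurable]:
  "(\<lambda>x. x i) \<in> borel_measurable (PiM I (\<lambda>_. (borel :: 'b::topological_space measure)))"
proof (cases "i \<in> I")
  case True thus ?thesis by (rule measurable_component_singleton)
next
  case False
  have "(\<lambda>x. undefined :: 'b) \<in> borel_measurable (PiM I (\<lambda>_. borel))" by simp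
  moreover have "\<And>x. x \<in> space (PiM I (\<lambda>_. (borel :: 'b measure))) \<Longrightarrow> x i = undefined"
    using False by (auto simp: space_PiM PiE_def extensional_def)
  ultimately show ?thesis using measurable_cong by (smt (verit))
qed

lemma wc_meas[measurable]: "(\<lambda>U. wc n U v i) \<in> borel_measurable (mat_space n)"
  unfolding wc_def mat_space_def by measurable

lemma mat_mult_meas: "mat_mult n V \<in> measurable (mat_space n) (mat_space n)"
  unfolding mat_mult_def mat_space_def
  by (rule measurable_restrict) (auto simp: split_beta)

lemma haar_inv:
  fixes f :: "_ \<Rightarrow> 'b::{banach,second_countable_topology}"
  assumes h: "is_haar_unitary n \<mu>" and V: "V \<in> unitary_set n"
    and f: "f \<in> borel_measurable (mat_space n)"
  shows "(\<integral>U. f (mat_mult n V U) \<partial>\<mu>) = (\<integral>U. f U \<partial>\<mu>)"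
proof -
  have s: "sets \<mu> = sets (mat_space n)" and d: "distr \<mu> (mat_space n) (mat_mult n V) = \<mu>"
    using h V unfolding is_haar_unitary_def by auto
  have m: "mat_mult n V \<in> measurable \<mu> (mat_space n)"
    using mat_mult_meas measurable_cong_sets[OF s refl] by blast
  have "(\<integral>U. f U \<partial>\<mu>) = (\<integral>U. f U \<partial>(distr \<mu> (mat_space n) (mat_mult n V)))" using d by simp
  also have "\<dots> = (\<integral>U. f (mat_mult n V U) \<partial>\<mu>)" by (rule integral_distr[OF m f])
  finally show ?thesis by simp
qed

lemma wc_mult:
  assumes "i < n"
  shows "wc n (mat_mult n V U) v i = (\<Sum>l<n. V (i,l) * wc n U v l)"
proof -
  have "wc n (mat_mult n V U) v i = (\<Sum>k<n. (\<Sum>l<n. V (i,l) * U (l,k)) * v k)"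
    using assms unfolding wc_def mat_mult_def by (intro sum.cong) auto
  also have "\<dots> = (\<Sum>k<n. \<Sum>l<n. V (i,l) * (U (l,k) * v k))"
    by (simp add: sum_distrib_right mult.assoc)
  also have "\<dots> = (\<Sum>l<n. V (i,l) * wc n U v l)"
    unfolding wc_def by (subst sum.swap) (simp add: sum_distrib_left)
  finally show ?thesis .
qed

lemma unitary_norm:
  assumes "U \<in> unitary_set n"
  shows "(\<Sum>i<n. wc n U v i * cnj (wc n U v i)) = (\<Sum>k<n. v k * cnj (v k))"
proof -
  have u: "\<And>k l. k < n \<Longrightarrow> l < n \<Longrightarrow> (\<Sum>i<n. U (i,k) * cnj (U (i,l))) = (if k = l then 1 else 0)"
  proof -
    fix k l assume "k < n" "l < n"
    then have "(\<Sum>i<n. cnj (U (i, l)) * U (i, k)) = (if l = k then 1 else 0)"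
      using assms unfolding unitary_set_def by auto
    then show "(\<Sum>i<n. U (i,k) * cnj (U (i,l))) = (if k = l then 1 else 0)"
      by (auto simp: mult.commute)
  qed
  have "(\<Sum>i<n. wc n U v i * cnj (wc n U v i))
      = (\<Sum>i<n. \<Sum>k<n. \<Sum>l<n. (U (i,k) * cnj (U (i,l))) * (v k * cnj (v l)))"
    unfolding wc_def apply (simp add: sum_distrib_left sum_distrib_right mult_ac)
    apply (rule sum.cong[OF refl]) apply (rule sum.swap[THEN trans]) by (simp add: mult_ac)
  also have "\<dots> = (\<Sum>k<n. \<Sum>l<n. (\<Sum>i<n. U (i,k) * cnj (U (i,l))) * (v k * cnj (v l)))"
    apply (rule sum.swap[THEN trans]) apply (rule sum.cong[OF refl])
    apply (rule sum.swap[THEN trans]) by (simp add: sum_distrib_right)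
  also have "\<dots> = (\<Sum>k<n. \<Sum>l<n. (if k = l then v k * cnj (v l) else 0))"
    by (intro sum.cong refl) (simp add: u)
  also have "\<dots> = (\<Sum>k<n. v k * cnj (v k))" by simp
  finally show ?thesis .
qed


definition sw :: "nat \<Rightarrow> nat \<Rightarrow> nat \<Rightarrow> nat" where
  "sw p q x = (if x = p then q else if x = q then p else x)"

lemma sw_sw[simp]: "sw p q (sw p q x) = x" unfolding sw_def by auto
lemma sw_eq: "(i = sw p q k) \<longleftrightarrow> (k = sw p q i)" unfolding sw_def by auto
lemma sw_lt: "p < n \<Longrightarrow> q < n \<Longrightarrow> i < n \<Longrightarrow> sw p q i < n" unfolding sw_def by auto

definition ph :: "nat \<Rightarrow> nat \<Rightarrow> (nat \<times> nat \<Rightarrow> complex)" where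
  "ph n p = restrict (\<lambda>(i,j). if i = j then (if i = p then \<i> else 1) else 0) ({..<n}\<times>{..<n})"

definition pm :: "nat \<Rightarrow> nat \<Rightarrow> nat \<Rightarrow> (nat \<times> nat \<Rightarrow> complex)" where
  "pm n p q = restrict (\<lambda>(i,l). if l = sw p q i then 1 else 0) ({..<n}\<times>{..<n})"

definition hd :: "nat \<Rightarrow> (nat \<times> nat \<Rightarrow> complex)" where
  "hd n = restrict (\<lambda>(i,l). if i < 2 \<and> l < 2 then (if i = 1 \<and> l = 1 then - complex_of_real (1/sqrt 2)
        else complex_of_real (1/sqrt 2)) else (if i = l then 1 else 0)) ({..<n}\<times>{..<n})"

lemma ph_unitary: "ph n p \<in> unitary_set n"
proof -
  { fix i j assume ij: "i < n" "j < n"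
    have "(\<Sum>k<n. cnj (ph n p (k, i)) * ph n p (k, j)) = (\<Sum>k<n. if k = i then (if i = j then 1 else 0) else 0)"
      using ij unfolding ph_def by (intro sum.cong refl) auto
    also have "\<dots> = (if i = j then 1 else 0)" using ij by simp
    finally have "(\<Sum>k<n. cnj (ph n p (k, i)) * ph n p (k, j)) = (if i = j then 1 else 0)" . }
  then show ?thesis unfolding unitary_set_def ph_def by auto
qed

lemma pm_unitary: assumes "p < n" "q < n" shows "pm n p q \<in> unitary_set n"
proof -
  { fix i j assume ij: "i < n" "j < n"
    have "(\<Sum>k<n. cnj (pm n p q (k, i)) * pm n p q (k, j))
        = (\<Sum>k<n. if k = sw p q i then (if j = sw p q k then 1 else 0) else 0)"
      using ij unfolding pm_def by (intro sum.cong refl) (auto simp: sw_eq)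
    also have "\<dots> = (if i = j then 1 else 0)"
      using ij sw_lt[OF assms] by (auto simp: sw_eq)
    finally have "(\<Sum>k<n. cnj (pm n p q (k, i)) * pm n p q (k, j)) = (if i = j then 1 else 0)" . }
  then show ?thesis unfolding unitary_set_def pm_def by auto
qed

lemma sum_lt2: "2 \<le> (n::nat) \<Longrightarrow> (\<Sum>l<n. if l < 2 then g l else 0) = g 0 + (g 1 :: complex)" for g :: "nat \<Rightarrow> complex"
proof -
  assume "2 \<le> n"
  have "(\<Sum>l<n. if l < 2 then g l else 0) = (\<Sum>l\<in>{..<n} \<inter> {..<2}. g l)"
    by (simp add: sum.inter_restrict)
  also have "{..<n} \<inter> {..<2} = {..<2::nat}" using \<open>2 \<le> n\<close> by auto
  finally show ?thesis by (simp add: numeral_2_eq_2)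
qed

lemma hd_unitary: assumes "2 \<le> n" shows "hd n \<in> unitary_set n"
proof -
  have r: "complex_of_real (1/sqrt 2) * complex_of_real (1/sqrt 2) = 1/2"
    by (simp flip: of_real_mult)
  have s2: "complex_of_real (sqrt 2) * complex_of_real (sqrt 2) = 2"
    by (simp flip: of_real_mult)
  { fix i j assume ij: "i < n" "j < n"
    have e: "{..<n} = {..<2} \<union> {2..<n}" using assms by auto
    have "(\<Sum>k<n. cnj (hd n (k, i)) * hd n (k, j)) =
       (\<Sum>k<2. cnj (hd n (k, i)) * hd n (k, j)) + (\<Sum>k\<in>{2..<n}. cnj (hd n (k, i)) * hd n (k, j))"
      unfolding e by (rule sum.union_disjoint) auto
    also have "(\<Sum>k\<in>{2..<n}. cnj (hd n (k, i)) * hd n (k, j)) = (\<Sum>k\<in>{2..<n}. if k = i \<and> k = j then 1 else 0)"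
      using ij unfolding hd_def by (intro sum.cong refl) auto
    also have "\<dots> = (if i = j \<and> 2 \<le> i then 1 else 0)"
      using ij by (cases "i = j") (auto simp: sum.delta intro!: sum.neutral)
    also have "(\<Sum>k<2. cnj (hd n (k, i)) * hd n (k, j)) =
       cnj (hd n (0, i)) * hd n (0, j) + cnj (hd n (1, i)) * hd n (1, j)"
      by (simp add: numeral_2_eq_2)
    finally have "(\<Sum>k<n. cnj (hd n (k, i)) * hd n (k, j)) = (if i = j then 1 else 0)"
      using ij assms unfolding hd_def by (cases "i < 2"; cases "j < 2") (auto simp: r s2)
  }
  then show ?thesis unfolding unitary_set_def hd_def by auto
qed

lemma wc_ph: assumes "i < n" shows "wc n (mat_mult n (ph n p) U) v i = (if i = p then \<i> else 1) * wc n U v i"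
proof -
  have "wc n (mat_mult n (ph n p) U) v i = (\<Sum>l<n. if l = i then (if i = p then \<i> else 1) * wc n U v l else 0)"
    using assms unfolding wc_mult[OF assms] by (intro sum.cong refl) (auto simp: ph_def)
  then show ?thesis using assms by simp
qed

lemma wc_pm: assumes "p < n" "q < n" "i < n"
  shows "wc n (mat_mult n (pm n p q) U) v i = wc n U v (sw p q i)"
proof -
  have "wc n (mat_mult n (pm n p q) U) v i = (\<Sum>l<n. if l = sw p q i then wc n U v l else 0)"
    using assms unfolding wc_mult[OF assms(3)] by (intro sum.cong refl) (auto simp: pm_def)
  then show ?thesis using sw_lt[OF assms] by simp
qed

lemma wc_hd: assumes "2 \<le> n" shows "wc n (mat_mult n (hd n) U) v 0 = complex_of_real (1/sqrt 2) * (wc n U v 0 + wc n U v 1)"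
proof -
  have "wc n (mat_mult n (hd n) U) v 0 = (\<Sum>l<n. if l < 2 then complex_of_real (1/sqrt 2) * wc n U v l else 0)"
    using assms by (simp add: wc_mult hd_def) (intro sum.cong refl, auto)
  also have "\<dots> = complex_of_real (1/sqrt 2) * (wc n U v 0 + wc n U v 1)"
    by (subst sum_lt2[OF assms]) (simp add: distrib_left)
  finally show ?thesis .
qed


lemma cnj_meas[measurable (raw)]:
  "f \<in> borel_measurable M \<Longrightarrow> (\<lambda>x. cnj (f x :: complex)) \<in> borel_measurable M"
  by (rule measurable_compose[of f M borel], assumption)
     (intro borel_measurable_continuous_onI continuous_intros)

locale hs =
  fixes n :: nat and \<mu> :: "(nat \<times> nat \<Rightarrow> complex) measure" and v :: "nat \<Rightarrow> complex"
  assumes haar: "is_haar_unitary n \<mu>" and unit: "(\<Sum>k<n. v k * cnj (v k)) = 1" and n2: "2 \<le> n"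
begin

lemma sets_mu: "sets \<mu> = sets (mat_space n)" using haar unfolding is_haar_unitary_def by auto
lemma ps: "prob_space \<mu>" using haar unfolding is_haar_unitary_def by auto

interpretation P: prob_space \<mu> by (rule ps)

lemma AE_unitary: "AE U in \<mu>. U \<in> unitary_set n"
proof -
  have e: "emeasure \<mu> (unitary_set n) = 1" using haar unfolding is_haar_unitary_def by auto
  then have s: "unitary_set n \<in> sets \<mu>" using emeasure_notin_sets by force
  then show ?thesis using e P.AE_in_set_eq_1[OF s] by (simp add: P.emeasure_eq_measure)
qed

abbreviation w where "w U i \<equiv> wc n U v i"

lemma wmeas[measurable]: "(\<lambda>U. w U i) \<in> borel_measurable \<mu>"
  using wc_meas measurable_cong_sets[OF sets_mu refl] by blast

lemma AE_good: "AE U in \<mu>. (\<Sum>i<n. w U i * cnj (w U i)) = 1 \<and> (\<forall>i<n. cmod (w U i) \<le> 1)"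
  using AE_unitary
proof eventually_elim
  case (elim U)
  have e: "(\<Sum>i<n. w U i * cnj (w U i)) = 1" using unitary_norm[OF elim] unit by simp
  then have "complex_of_real (\<Sum>i<n. (cmod (w U i))\<^sup>2) = 1" by (simp only: of_real_sum complex_norm_square)
  then have r: "(\<Sum>i<n. (cmod (w U i))\<^sup>2) = 1"
    using of_real_eq_1_iff by blast
  { fix i assume "i < n"
    then have "(cmod (w U i))\<^sup>2 \<le> (\<Sum>i<n. (cmod (w U i))\<^sup>2)"
      by (intro member_le_sum) auto
    then have "cmod (w U i) \<le> 1" using r by (simp add: power_le_one_iff abs_le_iff) }
  with e show ?case by auto
qed

definition mon where "mon U i j k l = w U i * w U j * cnj (w U k) * cnj (w U l)"
definition mom where "mom i j k l = (\<integral>U. mon U i j k l \<partial>\<mu>)"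

lemma mon_meas[measurable]: "(\<lambda>U. mon U i j k l) \<in> borel_measurable \<mu>"
  unfolding mon_def by (intro borel_measurable_times cnj_meas wmeas)

lemma mon_int: assumes "i < n" "j < n" "k < n" "l < n" shows "integrable \<mu> (\<lambda>U. mon U i j k l)"
proof (rule P.integrable_const_bound[where B=1])
  show "AE U in \<mu>. norm (mon U i j k l) \<le> 1"
    using AE_good
  proof eventually_elim
    case (elim U)
    then have "cmod (w U i) \<le> 1" "cmod (w U j) \<le> 1" "cmod (w U k) \<le> 1" "cmod (w U l) \<le> 1"
      using assms by auto
    then show ?case unfolding mon_def norm_mult complex_mod_cnj
      by (intro mult_le_one) (auto intro: mult_le_one)
  qed
qed simp

lemma mom_inv:
  assumes V: "V \<in> unitary_set n"
  shows "mom i j k l = (\<integral>U. mon (mat_mult n V U) i j k l \<partial>\<mu>)"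
proof -
  have f: "(\<lambda>U. mon U i j k l) \<in> borel_measurable (mat_space n)"
    unfolding mon_def by (intro borel_measurable_times cnj_meas wc_meas)
  show ?thesis unfolding mom_def using haar_inv[OF haar V f] by simp
qed

end


context hs begin

interpretation P: prob_space \<mu> by (rule ps)

lemma mom_phase:
  assumes "i < n" "j < n" "k < n" "l < n"
  shows "mom i j k l = ((if i = p then \<i> else 1) * (if j = p then \<i> else 1) *
     cnj (if k = p then \<i> else 1) * cnj (if l = p then \<i> else 1)) * mom i j k l"
proof -
  have "mom i j k l = (\<integral>U. mon (mat_mult n (ph n p) U) i j k l \<partial>\<mu>)" by (rule mom_inv[OF ph_unitary])
  also have "\<dots> = (\<integral>U. ((if i = p then \<i> else 1) * (if j = p then \<i> else 1) *
     cnj (if k = p then \<i> else 1) * cnj (if l = p then \<i> else 1)) * mon U i j k l \<partial>\<mu>)"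
    unfolding mon_def wc_ph[OF assms(1)] wc_ph[OF assms(2)] wc_ph[OF assms(3)] wc_ph[OF assms(4)]
      complex_cnj_mult by (simp only: mult_ac)
  also have "\<dots> = ((if i = p then \<i> else 1) * (if j = p then \<i> else 1) *
     cnj (if k = p then \<i> else 1) * cnj (if l = p then \<i> else 1)) * mom i j k l"
    unfolding mom_def by (rule integral_mult_right_zero)
  finally show ?thesis .
qed

lemma phase_lemma:
  fixes i j k l :: nat
  assumes "(if i = i then \<i> else 1) * (if j = i then \<i> else 1) *
     cnj (if k = i then \<i> else 1) * cnj (if l = i then \<i> else 1) = 1"
    and "(if i = j then \<i> else 1) * (if j = j then \<i> else 1) *
     cnj (if k = j then \<i> else 1) * cnj (if l = j then \<i> else 1) = 1"
  shows "(i = k \<and> j = l) \<or> (i = l \<and> j = k)"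
  using assms  apply (cases "i = j"; cases "k = i"; cases "l = i"; cases "k = j"; cases "l = j") by auto

lemma cancel_aux: "(x::complex) = c * x \<Longrightarrow> x \<noteq> 0 \<Longrightarrow> c = 1"
  by (metis mult_cancel_right1)

lemma mom_zero:
  assumes "i < n" "j < n" "k < n" "l < n" "\<not> ((i = k \<and> j = l) \<or> (i = l \<and> j = k))"
  shows "mom i j k l = 0"
proof (rule ccontr)
  assume nz: "mom i j k l \<noteq> 0"
  have c1: "(if i = i then \<i> else 1) * (if j = i then \<i> else 1) *
     cnj (if k = i then \<i> else 1) * cnj (if l = i then \<i> else 1) = 1"
    by (rule cancel_aux[OF mom_phase[OF assms(1-4), of i] nz])
  have c2: "(if i = j then \<i> else 1) * (if j = j then \<i> else 1) *
     cnj (if k = j then \<i> else 1) * cnj (if l = j then \<i> else 1) = 1"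
    by (rule cancel_aux[OF mom_phase[OF assms(1-4), of j] nz])
  from phase_lemma[OF c1 c2] assms(5) show False by blast
qed

end


context hs begin

interpretation P: prob_space \<mu> by (rule ps)

lemma mom_perm:
  assumes "p < n" "q < n" "i < n" "j < n" "k < n" "l < n"
  shows "mom i j k l = mom (sw p q i) (sw p q j) (sw p q k) (sw p q l)"
proof -
  have "mom i j k l = (\<integral>U. mon (mat_mult n (pm n p q) U) i j k l \<partial>\<mu>)"
    by (rule mom_inv[OF pm_unitary[OF assms(1,2)]])
  also have "\<dots> = mom (sw p q i) (sw p q j) (sw p q k) (sw p q l)"
    unfolding mom_def mon_def wc_pm[OF assms(1,2,3)] wc_pm[OF assms(1,2,4)]
      wc_pm[OF assms(1,2,5)] wc_pm[OF assms(1,2,6)] ..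
  finally show ?thesis .
qed

lemma mom_sw12: "mom i j k l = mom j i k l" unfolding mom_def mon_def by (simp add: mult_ac)
lemma mom_sw34: "mom i j k l = mom i j l k" unfolding mom_def mon_def by (simp add: mult_ac)

definition sm where "sm i = (\<integral>U. w U i * cnj (w U i) \<partial>\<mu>)"

lemma sm_int: assumes "i < n" shows "integrable \<mu> (\<lambda>U. w U i * cnj (w U i))"
proof (rule P.integrable_const_bound[where B=1])
  show "AE U in \<mu>. norm (w U i * cnj (w U i)) \<le> 1"
    using AE_good
  proof eventually_elim
    case (elim U)
    then have "cmod (w U i) \<le> 1" using assms by auto
    then show ?case unfolding norm_mult complex_mod_cnj by (intro mult_le_one) auto
  qed
qed (intro borel_measurable_times cnj_meas wmeas)

lemma sm_perm:
  assumes "p < n" "q < n" "i < n"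
  shows "sm i = sm (sw p q i)"
proof -
  have f: "(\<lambda>U. wc n U v i * cnj (wc n U v i)) \<in> borel_measurable (mat_space n)"
    by (intro borel_measurable_times cnj_meas wc_meas)
  have "sm i = (\<integral>U. w (mat_mult n (pm n p q) U) i * cnj (w (mat_mult n (pm n p q) U) i) \<partial>\<mu>)"
    unfolding sm_def using haar_inv[OF haar pm_unitary[OF assms(1,2)] f] by simp
  also have "\<dots> = sm (sw p q i)" unfolding sm_def wc_pm[OF assms] ..
  finally show ?thesis .
qed

lemma sm_sum: "(\<Sum>i<n. sm i) = 1"
proof -
  have "(\<Sum>i<n. sm i) = (\<integral>U. (\<Sum>i<n. w U i * cnj (w U i)) \<partial>\<mu>)"
    unfolding sm_def by (rule Bochner_Integration.integral_sum[symmetric]) (use sm_int in auto)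
  also have "\<dots> = (\<integral>U. 1 \<partial>\<mu>)"
  proof (rule integral_cong_AE)
    show "AE U in \<mu>. (\<Sum>i<n. w U i * cnj (w U i)) = 1" using AE_good by (rule AE_mp) (intro AE_I2 impI, blast)
  qed (intro borel_measurable_sum borel_measurable_times cnj_meas wmeas, simp)
  finally show ?thesis by (simp add: P.prob_space)
qed

lemma sm_val: assumes "i < n" shows "sm i = 1 / of_nat n"
proof -
  have n0: "0 < n" using n2 by auto
  have eq: "sm i = sm 0" if "i < n" for i
  proof -
    have "sm 0 = sm (sw 0 i 0)" by (rule sm_perm) (use n0 that in auto)
    then show "sm i = sm 0" by (simp add: sw_def)
  qed
  have "(\<Sum>i<n. sm i) = (\<Sum>i<n. sm 0)" by (rule sum.cong[OF refl]) (rule eq, simp)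
  then have "(\<Sum>i<n. sm i) = of_nat n * sm 0" by (simp only: sum_constant card_lessThan)
  with sm_sum have "of_nat n * sm 0 = 1" by simp
  then have "sm 0 = 1 / of_nat n" using n0 by (simp add: field_simps)
  with eq[OF assms] show ?thesis by simp
qed

lemma sum4: assumes "i < n" shows "(\<Sum>j<n. mom i j i j) = sm i"
proof -
  have "(\<Sum>j<n. mom i j i j) = (\<integral>U. (\<Sum>j<n. mon U i j i j) \<partial>\<mu>)"
    unfolding mom_def by (rule Bochner_Integration.integral_sum[symmetric]) (use mon_int assms in auto)
  also have "\<dots> = (\<integral>U. w U i * cnj (w U i) \<partial>\<mu>)"
  proof (rule integral_cong_AE)
    show "AE U in \<mu>. (\<Sum>j<n. mon U i j i j) = w U i * cnj (w U i)"
      using AE_good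
    proof eventually_elim
      case (elim U)
      have "(\<Sum>j<n. mon U i j i j) = w U i * cnj (w U i) * (\<Sum>j<n. w U j * cnj (w U j))"
        unfolding mon_def sum_distrib_left by (simp add: mult_ac)
      with elim show ?case by simp
    qed
  qed (intro borel_measurable_sum borel_measurable_times cnj_meas wmeas mon_meas)+
  finally show ?thesis unfolding sm_def .
qed

abbreviation "mA \<equiv> mom 0 0 0 0"
abbreviation "mB \<equiv> mom 0 1 0 1"

lemma momA: assumes "i < n" shows "mom i i i i = mA"
proof -
  have "mA = mom (sw 0 i 0) (sw 0 i 0) (sw 0 i 0) (sw 0 i 0)"
    by (rule mom_perm) (use assms n2 in auto)
  then show ?thesis by (simp add: sw_def)
qed

lemma momB0: assumes "j < n" "j \<noteq> 0" shows "mom 0 j 0 j = mB"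
proof -
  have "mB = mom (sw 1 j 0) (sw 1 j 1) (sw 1 j 0) (sw 1 j 1)"
    by (rule mom_perm) (use assms n2 in auto)
  then show ?thesis using assms by (simp add: sw_def)
qed

lemma momB: assumes "i < n" "j < n" "i \<noteq> j" shows "mom i j i j = mB"
proof (cases "i = 0")
  case True thus ?thesis using momB0[of j] assms by simp
next
  case False
  have a: "sw 0 i i = 0" by (simp add: sw_def)
  have b: "sw 0 i j \<noteq> 0" using assms False unfolding sw_def by auto
  have c: "sw 0 i j < n" using sw_lt[of 0 n i j] assms n2 by simp
  have "mom i j i j = mom (sw 0 i i) (sw 0 i j) (sw 0 i i) (sw 0 i j)"
    by (rule mom_perm) (use assms n2 in simp_all)
  also have "\<dots> = mom 0 (sw 0 i j) 0 (sw 0 i j)" by (simp only: a)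
  also have "\<dots> = mB" by (rule momB0[OF c b])
  finally show ?thesis .
qed

lemma mom_val:
  assumes "i < n" "j < n" "k < n" "l < n"
  shows "mom i j k l = (if (i = k \<and> j = l) \<or> (i = l \<and> j = k) then (if i = j then mA else mB) else 0)"
proof (cases "(i = k \<and> j = l) \<or> (i = l \<and> j = k)")
  case False show ?thesis by (subst if_not_P[OF False]) (rule mom_zero[OF assms False])
next
  case bal: True
  show ?thesis
  proof (cases "i = j")
    case True
    then have "k = i" "l = i" using bal by auto
    then show ?thesis using True bal momA[OF assms(1)] by simp
  next
    case False
    have "mom i j k l = mom i j i j"
      using bal mom_sw34[of i j j i] by auto
    also have "\<dots> = mB" by (rule momB[OF assms(1,2) False])
    finally show ?thesis using bal False by simp
  qed
qed

end


lemma sum2: "(\<Sum>a<(2::nat). f a) = f 0 + f 1"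
  by (simp add: numeral_2_eq_2)

context hs begin

interpretation P: prob_space \<mu> by (rule ps)

definition val :: "nat \<Rightarrow> nat \<Rightarrow> nat \<Rightarrow> nat \<Rightarrow> complex" where "val a b c d = (if (a = c \<and> b = d) \<or> (a = d \<and> b = c) then (if a = b then mA else mB) else 0)"

lemma mon_hd: "mon (mat_mult n (hd n) U) 0 0 0 0 = (1/4) * (\<Sum>a<2. \<Sum>b<2. \<Sum>c<2. \<Sum>d<2. mon U a b c d)"
proof -
  define r where "r = complex_of_real (1 / sqrt 2)"
  define x where "x = w U 0"
  define y where "y = w U 1"
  have rr: "r * r = 1/2" unfolding r_def by (simp flip: of_real_mult)
  have cr: "cnj r = r" unfolding r_def by simp
  have "mon (mat_mult n (hd n) U) 0 0 0 0 = (r * (x + y)) * (r * (x + y)) * (r * (cnj x + cnj y)) * (r * (cnj x + cnj y))"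
    unfolding mon_def wc_hd[OF n2] r_def[symmetric] x_def y_def by (simp add: cr)
  also have "\<dots> = (r * r) * (r * r) * ((x + y) * (x + y) * (cnj x + cnj y) * (cnj x + cnj y))"
    by (simp only: mult_ac)
  also have "\<dots> = (1/4) * ((x + y) * (x + y) * (cnj x + cnj y) * (cnj x + cnj y))"
    unfolding rr by simp
  also have "(x + y) * (x + y) * (cnj x + cnj y) * (cnj x + cnj y) = (\<Sum>a<2. \<Sum>b<2. \<Sum>c<2. \<Sum>d<2. mon U a b c d)"
    unfolding sum2 mon_def x_def y_def by (simp add: algebra_simps)
  finally show ?thesis .
qed

lemma mon_int2: "a < 2 \<Longrightarrow> b < 2 \<Longrightarrow> c < 2 \<Longrightarrow> d < 2 \<Longrightarrow> integrable \<mu> (\<lambda>U. mon U a b c d)"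
  using mon_int n2 by auto

lemma int16: "(\<integral>U. (\<Sum>a<2. \<Sum>b<2. \<Sum>c<2. \<Sum>d<2. mon U a b c d) \<partial>\<mu>) = (\<Sum>a<2. \<Sum>b<2. \<Sum>c<2. \<Sum>d<2. mom a b c d)"
  unfolding mom_def sum2
  by (simp add: Bochner_Integration.integral_add Bochner_Integration.integrable_add mon_int2)

lemma val16: "(\<Sum>a<2. \<Sum>b<2. \<Sum>c<2. \<Sum>d<2. mom a b c d) = (\<Sum>a<2. \<Sum>b<2. \<Sum>c<2. \<Sum>d<2. val a b c d)"
  by (intro sum.cong refl) (unfold val_def, rule mom_val, use n2 in auto)

lemma AB: "mA = 2 * mB"
proof -
  have "mA = (\<integral>U. mon (mat_mult n (hd n) U) 0 0 0 0 \<partial>\<mu>)" by (rule mom_inv[OF hd_unitary[OF n2]])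
  also have "\<dots> = (1/4) * (\<Sum>a<2. \<Sum>b<2. \<Sum>c<2. \<Sum>d<2. val a b c d)"
    unfolding mon_hd integral_mult_right_zero int16 val16 ..
  also have "(\<Sum>a<2. \<Sum>b<2. \<Sum>c<2. \<Sum>d<2. val a b c d) = 2 * mA + 4 * mB"
    unfolding sum2 val_def by simp
  finally show ?thesis by simp
qed

lemma Bval: "mB = 1 / (of_nat n * (of_nat n + 1))"
proof -
  have n0: "0 < n" using n2 by auto
  have "(\<Sum>j<n. mom 0 j 0 j) = (\<Sum>j<n. if j = 0 then mA else mB)"
  proof (rule sum.cong[OF refl])
    fix j assume "j \<in> {..<n}"
    then show "mom 0 j 0 j = (if j = 0 then mA else mB)"
    proof (cases "j = 0")
      case False
      have "mom 0 j 0 j = mB" using momB0 False \<open>j \<in> {..<n}\<close> by blast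
      then show ?thesis using False by simp
    qed simp
  qed
  also have "\<dots> = (\<Sum>j<n. mB + (if j = 0 then mA - mB else 0))"
    by (rule sum.cong[OF refl]) auto
  also have "\<dots> = of_nat n * mB + (mA - mB)"
    using n0 by (simp add: sum.distrib)
  finally have "of_nat n * mB + (mA - mB) = 1 / of_nat n"
    using sum4[of 0] sm_val[of 0] n0 by simp
  then have "of_nat n * mB + mB = 1 / of_nat n" unfolding AB by simp
  then have "(of_nat n + 1) * mB = 1 / of_nat n" by (simp add: algebra_simps)
  then have e: "mB * (of_nat n * (of_nat n + 1)) = 1" using n0 by (simp add: field_simps)
  have nz: "(of_nat n * (of_nat n + 1) :: complex) \<noteq> 0" using n0
    by (metis mult_eq_0_iff of_nat_0_eq_iff of_nat_Suc Suc_neq_Zero add.commute neq0_conv)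
  show ?thesis using e nz by (simp add: eq_divide_eq)
qed

lemma mom_formula:
  assumes "i < n" "j < n" "k < n" "l < n"
  shows "mom i j k l = ((if i = k \<and> j = l then 1 else 0) + (if i = l \<and> j = k then 1 else 0))
     / (of_nat n * (of_nat n + 1))"
  unfolding mom_val[OF assms] AB Bval by auto

end


lemma flat_eq: "flat_idx (dims3 d1 d2 d3) j = (j 0 * d2 + j 1) * d3 + j 2"
  unfolding flat_idx_def dims3_def by (simp add: algebra_simps)

lemma divmod_aux: "(r::nat) < q \<Longrightarrow> (x * q + r) mod q = r \<and> (x * q + r) div q = x"
  by simp

lemma flat_bound:
  assumes "j 0 < d1" "j 1 < d2" "j 2 < d3"
  shows "flat_idx (dims3 d1 d2 d3) j < d1 * d2 * d3"
proof -
  have "j 0 * d2 + j 1 < d1 * d2"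
  proof -
    have "j 0 * d2 + j 1 < j 0 * d2 + d2" using assms by simp
    also have "\<dots> = (j 0 + 1) * d2" by simp
    also have "\<dots> \<le> d1 * d2" using assms by (intro mult_right_mono) auto
    finally show ?thesis .
  qed
  then have "(j 0 * d2 + j 1) * d3 + j 2 < (j 0 * d2 + j 1) * d3 + d3" using assms by simp
  also have "\<dots> = (j 0 * d2 + j 1 + 1) * d3" by simp
  also have "\<dots> \<le> (d1 * d2) * d3" using \<open>j 0 * d2 + j 1 < d1 * d2\<close> by (intro mult_right_mono) auto
  finally show ?thesis unfolding flat_eq by simp
qed

lemma flat_inj:
  assumes "j 1 < d2" "j 2 < d3" "j' 1 < d2" "j' 2 < d3"
    and "flat_idx (dims3 d1 d2 d3) j = flat_idx (dims3 d1 d2 d3) j'"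
  shows "j 0 = j' 0 \<and> j 1 = j' 1 \<and> j 2 = j' 2"
proof -
  have e: "(j 0 * d2 + j 1) * d3 + j 2 = (j' 0 * d2 + j' 1) * d3 + j' 2" using assms(5) unfolding flat_eq .
  have "j 2 = j' 2" using arg_cong[OF e, of "\<lambda>x. x mod d3"] assms by simp
  moreover have e2: "j 0 * d2 + j 1 = j' 0 * d2 + j' 1" using arg_cong[OF e, of "\<lambda>x. x div d3"] assms by simp
  moreover have "j 1 = j' 1" using arg_cong[OF e2, of "\<lambda>x. x mod d2"] assms by simp
  moreover have "j 0 = j' 0" using arg_cong[OF e2, of "\<lambda>x. x div d2"] assms by simp
  ultimately show ?thesis by simp
qed

definition fI :: "nat \<Rightarrow> nat \<Rightarrow> nat \<Rightarrow> nat set \<Rightarrow> (nat \<Rightarrow> nat) \<Rightarrow> (nat \<Rightarrow> nat) \<Rightarrow> nat" where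
  "fI d1 d2 d3 A a b = flat_idx (dims3 d1 d2 d3) (merge_idx A a b)"

lemma merge_lt:
  assumes "A \<subseteq> {0,1,2}" "a \<in> idx_set D A" "b \<in> idx_set D ({0,1,2} - A)" "k \<in> {0,1,2}"
  shows "merge_idx A a b k < D k"
  using assms unfolding merge_idx_def idx_set_def by (auto simp: PiE_iff)

lemma fI_bound:
  assumes "A \<subseteq> {0,1,2}" "a \<in> idx_set (dims3 d1 d2 d3) A" "b \<in> idx_set (dims3 d1 d2 d3) ({0,1,2} - A)"
  shows "fI d1 d2 d3 A a b < d1 * d2 * d3"
  unfolding fI_def
  using merge_lt[OF assms, of 0] merge_lt[OF assms, of 1] merge_lt[OF assms, of 2]
  by (intro flat_bound) (simp_all add: dims3_def)

lemma fI_inj: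
  assumes A: "A \<subseteq> {0,1,2}" and a: "a \<in> idx_set (dims3 d1 d2 d3) A" "a' \<in> idx_set (dims3 d1 d2 d3) A"
    and b: "b \<in> idx_set (dims3 d1 d2 d3) ({0,1,2} - A)" "b' \<in> idx_set (dims3 d1 d2 d3) ({0,1,2} - A)"
  shows "fI d1 d2 d3 A a b = fI d1 d2 d3 A a' b' \<longleftrightarrow> a = a' \<and> b = b'"
proof
  assume e: "fI d1 d2 d3 A a b = fI d1 d2 d3 A a' b'"
  have l1: "\<And>k. k \<in> {0,1,2} \<Longrightarrow> merge_idx A a b k < dims3 d1 d2 d3 k" by (rule merge_lt[OF A a(1) b(1)])
  have l2: "\<And>k. k \<in> {0,1,2} \<Longrightarrow> merge_idx A a' b' k < dims3 d1 d2 d3 k" by (rule merge_lt[OF A a(2) b(2)])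
  have m: "\<And>k. k \<in> {0,1,2} \<Longrightarrow> merge_idx A a b k = merge_idx A a' b' k"
    using flat_inj[of "merge_idx A a b" d2 d3 "merge_idx A a' b'" d1] e l1[of 1] l1[of 2] l2[of 1] l2[of 2]
    unfolding fI_def by (auto simp: dims3_def)
  have "a = a'"
  proof
    fix k show "a k = a' k"
    proof (cases "k \<in> A")
      case True then show ?thesis using m[of k] A unfolding merge_idx_def by auto
    next
      case False then show ?thesis using a unfolding idx_set_def by (auto simp: PiE_def extensional_def)
    qed
  qed
  moreover have "b = b'"
  proof
    fix k show "b k = b' k"
    proof (cases "k \<in> {0,1,2} - A")
      case True then show ?thesis using m[of k] unfolding merge_idx_def by auto
    next
      case False then show ?thesis using b unfolding idx_set_def by (auto simp: PiE_def extensional_def)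
    qed
  qed
  ultimately show "a = a' \<and> b = b'" ..
qed simp

lemma purity_expand:
  "purity D A \<psi> = Re (\<Sum>a\<in>idx_set D A. \<Sum>a'\<in>idx_set D A. \<Sum>b\<in>idx_set D ({0,1,2} - A). \<Sum>b'\<in>idx_set D ({0,1,2} - A).
     \<psi> (flat_idx D (merge_idx A a b)) * \<psi> (flat_idx D (merge_idx A a' b')) *
     cnj (\<psi> (flat_idx D (merge_idx A a' b))) * cnj (\<psi> (flat_idx D (merge_idx A a b'))))"
  unfolding purity_def Let_def
  by (simp add: sum_product mult_ac)


lemma int_sum4:
  fixes g :: "_ \<Rightarrow> _ \<Rightarrow> _ \<Rightarrow> _ \<Rightarrow> _ \<Rightarrow> complex"
  assumes "\<And>a a' b b'. a\<in>I1 \<Longrightarrow> a'\<in>I2 \<Longrightarrow> b\<in>I3 \<Longrightarrow> b'\<in>I4 \<Longrightarrow> integrable M (g a a' b b')"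
  shows "(\<integral>x. (\<Sum>a\<in>I1. \<Sum>a'\<in>I2. \<Sum>b\<in>I3. \<Sum>b'\<in>I4. g a a' b b' x) \<partial>M)
       = (\<Sum>a\<in>I1. \<Sum>a'\<in>I2. \<Sum>b\<in>I3. \<Sum>b'\<in>I4. (\<integral>x. g a a' b b' x \<partial>M))"
proof -
  have i3: "integrable M (\<lambda>x. \<Sum>b'\<in>I4. g a a' b b' x)" if "a\<in>I1" "a'\<in>I2" "b\<in>I3" for a a' b
    by (rule Bochner_Integration.integrable_sum) (rule assms, use that in auto)
  have i2: "integrable M (\<lambda>x. \<Sum>b\<in>I3. \<Sum>b'\<in>I4. g a a' b b' x)" if "a\<in>I1" "a'\<in>I2" for a a'
    by (rule Bochner_Integration.integrable_sum) (rule i3, use that in auto)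
  have i1: "integrable M (\<lambda>x. \<Sum>a'\<in>I2. \<Sum>b\<in>I3. \<Sum>b'\<in>I4. g a a' b b' x)" if "a\<in>I1" for a
    by (rule Bochner_Integration.integrable_sum) (rule i2, use that in auto)
  have "(\<integral>x. (\<Sum>a\<in>I1. \<Sum>a'\<in>I2. \<Sum>b\<in>I3. \<Sum>b'\<in>I4. g a a' b b' x) \<partial>M)
      = (\<Sum>a\<in>I1. (\<integral>x. (\<Sum>a'\<in>I2. \<Sum>b\<in>I3. \<Sum>b'\<in>I4. g a a' b b' x) \<partial>M))"
    by (rule Bochner_Integration.integral_sum) (rule i1)
  also have "\<dots> = (\<Sum>a\<in>I1. \<Sum>a'\<in>I2. (\<integral>x. (\<Sum>b\<in>I3. \<Sum>b'\<in>I4. g a a' b b' x) \<partial>M))"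
    by (intro sum.cong refl Bochner_Integration.integral_sum i2)
  also have "\<dots> = (\<Sum>a\<in>I1. \<Sum>a'\<in>I2. \<Sum>b\<in>I3. (\<integral>x. (\<Sum>b'\<in>I4. g a a' b b' x) \<partial>M))"
    by (intro sum.cong refl Bochner_Integration.integral_sum i3)
  also have "\<dots> = (\<Sum>a\<in>I1. \<Sum>a'\<in>I2. \<Sum>b\<in>I3. \<Sum>b'\<in>I4. (\<integral>x. g a a' b b' x \<partial>M))"
    by (intro sum.cong refl Bochner_Integration.integral_sum assms)
  finally show ?thesis .
qed

context hs begin

interpretation P: prob_space \<mu> by (rule ps)

lemma E_purity:
  assumes nd: "n = d1 * d2 * d3" and A: "A \<subseteq> {0,1,2}"
  shows "(\<integral>U. purity (dims3 d1 d2 d3) A (mat_apply n U v) \<partial>\<mu>) =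
    real (card (idx_set (dims3 d1 d2 d3) A) * card (idx_set (dims3 d1 d2 d3) ({0,1,2} - A)) *
      (card (idx_set (dims3 d1 d2 d3) A) + card (idx_set (dims3 d1 d2 d3) ({0,1,2} - A))))
     / (real n * (real n + 1))"
proof -
  define D where "D = dims3 d1 d2 d3"
  define IA where "IA = idx_set D A"
  define IB where "IB = idx_set D ({0,1,2} - A)"
  define f where "f = fI d1 d2 d3 A"
  have finA: "finite IA" unfolding IA_def idx_set_def using A by (intro finite_PiE) (auto intro: finite_subset)
  have finB: "finite IB" unfolding IB_def idx_set_def by (intro finite_PiE) auto
  have fb: "\<And>a b. a \<in> IA \<Longrightarrow> b \<in> IB \<Longrightarrow> f a b < n"
    unfolding f_def IA_def IB_def D_def nd by (rule fI_bound[OF A])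
  have finj: "\<And>a a' b b'. a \<in> IA \<Longrightarrow> a' \<in> IA \<Longrightarrow> b \<in> IB \<Longrightarrow> b' \<in> IB \<Longrightarrow> f a b = f a' b' \<longleftrightarrow> a = a' \<and> b = b'"
    unfolding f_def IA_def IB_def D_def by (rule fI_inj[OF A])
  have ma: "\<And>U m. m < n \<Longrightarrow> mat_apply n U v m = w U m" by (simp add: mat_apply_def wc_def)
  define g where "g U = (\<Sum>a\<in>IA. \<Sum>a'\<in>IA. \<Sum>b\<in>IB. \<Sum>b'\<in>IB. mon U (f a b) (f a' b') (f a' b) (f a b'))" for U
  have s1: "purity D A (mat_apply n U v) = Re (g U)" for U
  proof -
    have fe: "flat_idx D (merge_idx A a b) = f a b" for a b unfolding f_def fI_def D_def ..
    show ?thesis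
      unfolding purity_expand g_def IA_def[symmetric] IB_def[symmetric] fe
      by (intro arg_cong[where f=Re] sum.cong refl) (simp add: mon_def ma fb)
  qed
  have int: "integrable \<mu> (\<lambda>U. mon U (f a b) (f a' b') (f a' b) (f a b'))"
    if "a \<in> IA" "a' \<in> IA" "b \<in> IB" "b' \<in> IB" for a a' b b'
    by (rule mon_int) (use fb that in auto)
  have "(\<integral>U. g U \<partial>\<mu>) = (\<Sum>a\<in>IA. \<Sum>a'\<in>IA. \<Sum>b\<in>IB. \<Sum>b'\<in>IB. mom (f a b) (f a' b') (f a' b) (f a b'))"
    unfolding g_def mom_def
    by (rule int_sum4[where g="\<lambda>a a' b b' U. mon U (f a b) (f a' b') (f a' b) (f a b')"]) (rule int)
  also have "\<dots> = (\<Sum>a\<in>IA. \<Sum>a'\<in>IA. \<Sum>b\<in>IB. \<Sum>b'\<in>IB.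
      ((if a = a' then 1 else 0) + (if b = b' then 1 else 0)) / (of_nat n * (of_nat n + 1)))"
  proof (intro sum.cong refl)
    fix a a' b b' assume h: "a \<in> IA" "a' \<in> IA" "b \<in> IB" "b' \<in> IB"
    have "mom (f a b) (f a' b') (f a' b) (f a b') =
      ((if f a b = f a' b \<and> f a' b' = f a b' then 1 else 0) + (if f a b = f a b' \<and> f a' b' = f a' b then 1 else 0))
       / (of_nat n * (of_nat n + 1))"
      by (rule mom_formula) (use fb h in auto)
    also have "\<dots> = ((if a = a' then 1 else 0) + (if b = b' then 1 else 0)) / (of_nat n * (of_nat n + 1))"
      using finj[of a a' b b] finj[of a' a b' b'] finj[of a a b b'] finj[of a' a' b' b] h by auto
    finally show "mom (f a b) (f a' b') (f a' b) (f a b') =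
      ((if a = a' then 1 else 0) + (if b = b' then 1 else 0)) / (of_nat n * (of_nat n + 1))" .
  qed
  also have "\<dots> = (\<Sum>a\<in>IA. \<Sum>a'\<in>IA. \<Sum>b\<in>IB. \<Sum>b'\<in>IB.
      ((if a = a' then 1 else 0) + (if b = b' then 1 else 0))) / (of_nat n * (of_nat n + 1))"
    by (simp add: sum_divide_distrib)
  also have "(\<Sum>a\<in>IA. \<Sum>a'\<in>IA. \<Sum>b\<in>IB. \<Sum>b'\<in>IB. ((if a = a' then 1 else 0) + (if b = b' then 1 else 0)) :: complex)
      = of_nat (card IA * card IB * (card IA + card IB))"
  proof -
    have x: "(\<Sum>a\<in>IA. \<Sum>a'\<in>IA. (if a = a' then 1 else 0::complex)) = of_nat (card IA)" using finA by simp
    have y: "(\<Sum>a\<in>IB. \<Sum>a'\<in>IB. (if a = a' then 1 else 0::complex)) = of_nat (card IB)" using finB by simp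
    have p1: "(\<Sum>a\<in>IA. \<Sum>a'\<in>IA. \<Sum>b\<in>IB. \<Sum>b'\<in>IB. (if a = a' then 1 else 0::complex))
       = (\<Sum>a\<in>IA. \<Sum>a'\<in>IA. (if a = a' then 1 else 0::complex)) * of_nat (card IB * card IB)"
      by (simp add: sum_distrib_right sum_distrib_left mult_ac)
    have p2: "(\<Sum>a\<in>IA. \<Sum>a'\<in>IA. \<Sum>b\<in>IB. \<Sum>b'\<in>IB. (if b = b' then 1 else 0::complex))
       = of_nat (card IA * card IA) * (\<Sum>b\<in>IB. \<Sum>b'\<in>IB. (if b = b' then 1 else 0::complex))"
      by (simp only: sum_constant of_nat_mult) (simp add: mult_ac)
    show ?thesis unfolding sum.distrib p1 p2 x y by (simp add: algebra_simps)
  qed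
  finally have "(\<integral>U. g U \<partial>\<mu>) = complex_of_real (real (card IA * card IB * (card IA + card IB)) / (real n * (real n + 1)))"
    by simp
  moreover have "(\<integral>U. purity D A (mat_apply n U v) \<partial>\<mu>) = Re (\<integral>U. g U \<partial>\<mu>)"
  proof -
    have ig: "integrable \<mu> g" unfolding g_def
      by (intro Bochner_Integration.integrable_sum int) auto
    show ?thesis unfolding s1 by (rule integral_Re[OF ig])
  qed
  ultimately show ?thesis unfolding D_def IA_def IB_def by simp
qed

end


lemma arith_fin: "(K::real) \<noteq> 0 \<Longrightarrow> 2 - 2/3 * (a/K + b/K + c/K) = (3*K - (a+b+c)) / ((3/2)*K)"
  by (simp add: field_simps)

context hs begin

interpretation P: prob_space \<mu> by (rule ps)

lemma int_purity:
  assumes nd: "n = d1 * d2 * d3" and A: "A \<subseteq> {0,1,2}"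
  shows "integrable \<mu> (\<lambda>U. purity (dims3 d1 d2 d3) A (mat_apply n U v))"
proof -
  define D where "D = dims3 d1 d2 d3"
  define IA where "IA = idx_set D A"
  define IB where "IB = idx_set D ({0,1,2} - A)"
  define f where "f = fI d1 d2 d3 A"
  have fb: "\<And>a b. a \<in> IA \<Longrightarrow> b \<in> IB \<Longrightarrow> f a b < n"
    unfolding f_def IA_def IB_def D_def nd by (rule fI_bound[OF A])
  have ma: "\<And>U m. m < n \<Longrightarrow> mat_apply n U v m = w U m" by (simp add: mat_apply_def wc_def)
  define g where "g U = (\<Sum>a\<in>IA. \<Sum>a'\<in>IA. \<Sum>b\<in>IB. \<Sum>b'\<in>IB. mon U (f a b) (f a' b') (f a' b) (f a b'))" for U
  have s1: "purity D A (mat_apply n U v) = Re (g U)" for U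
  proof -
    have fe: "flat_idx D (merge_idx A a b) = f a b" for a b unfolding f_def fI_def D_def ..
    show ?thesis
      unfolding purity_expand g_def IA_def[symmetric] IB_def[symmetric] fe
      by (intro arg_cong[where f=Re] sum.cong refl) (simp add: mon_def ma fb)
  qed
  have int: "integrable \<mu> (\<lambda>U. mon U (f a b) (f a' b') (f a' b) (f a b'))"
    if "a \<in> IA" "a' \<in> IA" "b \<in> IB" "b' \<in> IB" for a a' b b'
    by (rule mon_int) (use fb that in auto)
  have ig: "integrable \<mu> g" unfolding g_def
    by (intro Bochner_Integration.integrable_sum int) auto
  then show ?thesis unfolding D_def[symmetric] s1 by simp
qed

lemma E_tangle:
  assumes nd: "n = d1 * d2 * d3"
  shows "(\<integral>U. one_tangle (dims3 d1 d2 d3) (mat_apply n U v) \<partial>\<mu>) =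
    (3 * real (d1 * d2 * d3) + 3 - real d1 - real d2 - real d3
       - real (d1 * d2) - real (d1 * d3) - real (d2 * d3))
    / ((3 / 2) * (real (d1 * d2 * d3) + 1))"
proof -
  define D where "D = dims3 d1 d2 d3"
  define p where "p A U = purity D A (mat_apply n U v)" for A U
  have i01: "integrable \<mu> (p {0,1})" unfolding p_def D_def by (rule int_purity[OF nd]) auto
  have i02: "integrable \<mu> (p {0,2})" unfolding p_def D_def by (rule int_purity[OF nd]) auto
  have i12: "integrable \<mu> (p {1,2})" unfolding p_def D_def by (rule int_purity[OF nd]) auto
  have c1: "{0,1,2} - {0,1} = {2::nat}" "{0,1,2} - {0,2} = {1::nat}" "{0,1,2} - {1,2} = {0::nat}" by auto
  have e01: "(\<integral>U. p {0,1} U \<partial>\<mu>) = real (d1*d2*d3*(d1*d2 + d3)) / (real n * (real n + 1))"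
    unfolding p_def D_def using E_purity[OF nd, of "{0,1}"] c1
    by (simp add: idx_set_def card_PiE dims3_def algebra_simps)
  have e02: "(\<integral>U. p {0,2} U \<partial>\<mu>) = real (d1*d2*d3*(d1*d3 + d2)) / (real n * (real n + 1))"
    unfolding p_def D_def using E_purity[OF nd, of "{0,2}"] c1
    by (simp add: idx_set_def card_PiE dims3_def algebra_simps)
  have e12: "(\<integral>U. p {1,2} U \<partial>\<mu>) = real (d1*d2*d3*(d2*d3 + d1)) / (real n * (real n + 1))"
    unfolding p_def D_def using E_purity[OF nd, of "{1,2}"] c1
    by (simp add: idx_set_def card_PiE dims3_def algebra_simps)
  have ot: "one_tangle D (mat_apply n U v) = 2 - (2/3) * (p {0,1} U + p {0,2} U + p {1,2} U)" for U
    unfolding one_tangle_def tangle_def p_def by (simp add: field_simps)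
  have "(\<integral>U. one_tangle D (mat_apply n U v) \<partial>\<mu>) = 2 - (2/3) * ((\<integral>U. p {0,1} U \<partial>\<mu>) + (\<integral>U. p {0,2} U \<partial>\<mu>) + (\<integral>U. p {1,2} U \<partial>\<mu>))"
    unfolding ot using i01 i02 i12 by (simp add: P.prob_space)
  also have "\<dots> = (3 * real (d1 * d2 * d3) + 3 - real d1 - real d2 - real d3
       - real (d1 * d2) - real (d1 * d3) - real (d2 * d3))
    / ((3 / 2) * (real (d1 * d2 * d3) + 1))"
  proof -
    have N: "real n > 0" using n2 by simp
    have r: "real (n * x) / (real n * (real n + 1)) = real x / (real n + 1)" for x
    proof -
      have "real (n * x) / (real n * (real n + 1)) = (real n * real x) / (real n * (real n + 1))" by simp
      also have "\<dots> = real x / (real n + 1)" using N by (intro mult_divide_mult_cancel_left) simp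
      finally show ?thesis .
    qed
    have N1: "real (d1*d2*d3) + 1 \<noteq> 0" by (metis of_nat_Suc of_nat_eq_0_iff Suc_eq_plus1 nat.distinct(1) add.commute)
    have N1': "real n + 1 \<noteq> 0" using N by simp
    show ?thesis unfolding e01 e02 e12 nd[symmetric] r arith_fin[OF N1']
      by (simp add: algebra_simps nd)
  qed
  finally show ?thesis unfolding D_def .
qed

end


lemma unit_bound:
  assumes U: "U \<in> unitary_set n" and v: "(\<Sum>k<n. v k * cnj (v k)) = 1" and m: "m < n"
  shows "cmod (mat_apply n U v m) \<le> 1"
proof -
  have e: "(\<Sum>i<n. wc n U v i * cnj (wc n U v i)) = 1" using unitary_norm[OF U] v by simp
  then have "complex_of_real (\<Sum>i<n. (cmod (wc n U v i))\<^sup>2) = 1" by (simp only: of_real_sum complex_norm_square)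
  then have r: "(\<Sum>i<n. (cmod (wc n U v i))\<^sup>2) = 1" using of_real_eq_1_iff by blast
  have "(cmod (wc n U v m))\<^sup>2 \<le> (\<Sum>i<n. (cmod (wc n U v i))\<^sup>2)"
    using m by (intro member_le_sum) auto
  then have "cmod (wc n U v m) \<le> 1" using r by (simp add: power_le_one_iff abs_le_iff)
  then show ?thesis using m by (simp add: mat_apply_def wc_def)
qed

lemma purity_bound:
  assumes A: "A \<subseteq> {0,1,2}" and nd: "n = d1 * d2 * d3" and b: "\<And>m. m < n \<Longrightarrow> cmod (\<psi> m) \<le> 1"
  shows "\<bar>purity (dims3 d1 d2 d3) A \<psi>\<bar> \<le> real (card (idx_set (dims3 d1 d2 d3) A) * card (idx_set (dims3 d1 d2 d3) A)
      * card (idx_set (dims3 d1 d2 d3) ({0,1,2} - A)) * card (idx_set (dims3 d1 d2 d3) ({0,1,2} - A)))"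
proof -
  define D where "D = dims3 d1 d2 d3"
  define IA where "IA = idx_set D A"
  define IB where "IB = idx_set D ({0,1,2} - A)"
  define f where "f = fI d1 d2 d3 A"
  have fb: "\<And>a b. a \<in> IA \<Longrightarrow> b \<in> IB \<Longrightarrow> f a b < n"
    unfolding f_def IA_def IB_def D_def nd by (rule fI_bound[OF A])
  have fe: "flat_idx D (merge_idx A a b) = f a b" for a b unfolding f_def fI_def D_def ..
  define t where "t a a' b b' = \<psi> (f a b) * \<psi> (f a' b') * cnj (\<psi> (f a' b)) * cnj (\<psi> (f a b'))" for a a' b b'
  have tb: "cmod (t a a' b b') \<le> 1" if "a \<in> IA" "a' \<in> IA" "b \<in> IB" "b' \<in> IB" for a a' b b'
  proof -
    have "cmod (\<psi> (f a b)) \<le> 1" "cmod (\<psi> (f a' b')) \<le> 1" "cmod (\<psi> (f a' b)) \<le> 1" "cmod (\<psi> (f a b')) \<le> 1"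
      using b fb that by auto
    then show ?thesis unfolding t_def norm_mult complex_mod_cnj
      by (intro mult_le_one) (auto intro: mult_le_one)
  qed
  have "\<bar>purity D A \<psi>\<bar> = \<bar>Re (\<Sum>a\<in>IA. \<Sum>a'\<in>IA. \<Sum>b\<in>IB. \<Sum>b'\<in>IB. t a a' b b')\<bar>"
    unfolding purity_expand IA_def[symmetric] IB_def[symmetric] fe t_def ..
  also have "\<dots> \<le> cmod (\<Sum>a\<in>IA. \<Sum>a'\<in>IA. \<Sum>b\<in>IB. \<Sum>b'\<in>IB. t a a' b b')" by (rule abs_Re_le_cmod)
  also have "\<dots> \<le> (\<Sum>a\<in>IA. \<Sum>a'\<in>IA. \<Sum>b\<in>IB. \<Sum>b'\<in>IB. cmod (t a a' b b'))"
    by (rule order.trans[OF norm_sum] sum_mono)+ (rule order.refl)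
  also have "\<dots> \<le> (\<Sum>a\<in>IA. \<Sum>a'\<in>IA. \<Sum>b\<in>IB. \<Sum>b'\<in>IB. (1::real))"
    by (intro sum_mono tb)
  also have "\<dots> = real (card IA * card IA * card IB * card IB)" by simp
  finally show ?thesis unfolding D_def IA_def IB_def .
qed

lemma tangle_bound:
  assumes U: "U \<in> unitary_set n" and v: "(\<Sum>k<n. v k * cnj (v k)) = 1" and nd: "n = d1 * d2 * d3"
  shows "\<bar>one_tangle (dims3 d1 d2 d3) (mat_apply n U v)\<bar> \<le> 2 + 2 * real n ^ 2"
proof -
  have b: "\<And>m. m < n \<Longrightarrow> cmod (mat_apply n U v m) \<le> 1" by (rule unit_bound[OF U v])
  have c1: "{0,1,2} - {0,1} = {2::nat}" "{0,1,2} - {0,2} = {1::nat}" "{0,1,2} - {1,2} = {0::nat}" by auto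
  have p1: "\<bar>purity (dims3 d1 d2 d3) {0,1} (mat_apply n U v)\<bar> \<le> real n ^ 2"
    using purity_bound[of "{0,1}" n d1 d2 d3, OF _ nd b] c1 nd
    by (simp add: idx_set_def card_PiE dims3_def power2_eq_square mult_ac)
  have p2: "\<bar>purity (dims3 d1 d2 d3) {0,2} (mat_apply n U v)\<bar> \<le> real n ^ 2"
    using purity_bound[of "{0,2}" n d1 d2 d3, OF _ nd b] c1 nd
    by (simp add: idx_set_def card_PiE dims3_def power2_eq_square mult_ac)
  have p3: "\<bar>purity (dims3 d1 d2 d3) {1,2} (mat_apply n U v)\<bar> \<le> real n ^ 2"
    using purity_bound[of "{1,2}" n d1 d2 d3, OF _ nd b] c1 nd
    by (simp add: idx_set_def card_PiE dims3_def power2_eq_square mult_ac)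
  show ?thesis unfolding one_tangle_def tangle_def using p1 p2 p3 by (simp add: abs_le_iff)
qed


lemma sum_split: "(\<Sum>i<p*q. g i) = (\<Sum>a<p. \<Sum>c<q. (g (a*q + c) :: 'a::comm_monoid_add))" for p q :: nat
proof -
  have "(\<Sum>c<q. g (a*q + c)) = sum g {a*q..<a*q+q}" for a
  proof -
    have "sum g {0 + a*q..<q + a*q} = (\<Sum>c\<in>{0..<q}. g (c + a*q))" by (rule sum.shift_bounds_nat_ivl)
    then show ?thesis by (simp add: atLeast0LessThan add.commute)
  qed
  then show ?thesis by (simp add: sum.nat_group)
qed

lemma prod_norm:
  assumes "0 < d2" "0 < d3"
  shows "(\<Sum>m<d1*d2*d3. prod_vec3 (dims3 d1 d2 d3) x1 x2 x3 m * cnj (prod_vec3 (dims3 d1 d2 d3) x1 x2 x3 m))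
    = (\<Sum>a<d1. x1 a * cnj (x1 a)) * (\<Sum>b<d2. x2 b * cnj (x2 b)) * (\<Sum>c<d3. x3 c * cnj (x3 c))"
proof -
  define h where "h m = prod_vec3 (dims3 d1 d2 d3) x1 x2 x3 m * cnj (prod_vec3 (dims3 d1 d2 d3) x1 x2 x3 m)" for m
  have hv: "h ((a*d2 + b)*d3 + c) = (x1 a * cnj (x1 a)) * (x2 b * cnj (x2 b)) * (x3 c * cnj (x3 c))"
    if "a < d1" "b < d2" "c < d3" for a b c
  proof -
    define m where "m = (a*d2 + b)*d3 + c"
    have m1: "m mod d3 = c" "m div d3 = a*d2 + b" unfolding m_def using that by simp_all
    have m2: "(m div d3) mod d2 = b" "m div (d2*d3) = a" using that
      by (simp_all add: m1 div_mult2_eq[of m d3 d2, unfolded mult.commute[of d3 d2]])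
    have ml: "m < d1*d2*d3" unfolding m_def using flat_bound[of "\<lambda>k. if k = 0 then a else if k = 1 then b else c" d1 d2 d3] that
      by (simp add: flat_eq)
    show ?thesis unfolding m_def[symmetric] h_def prod_vec3_def using ml
      using that by (simp add: dims3_def m1 m2 mult_ac)
  qed
  have "(\<Sum>m<d1*d2*d3. h m) = (\<Sum>a<d1. \<Sum>b<d2. \<Sum>c<d3. h ((a*d2 + b)*d3 + c))"
    by (simp only: sum_split algebra_simps)
  also have "\<dots> = (\<Sum>a<d1. \<Sum>b<d2. \<Sum>c<d3. (x1 a * cnj (x1 a)) * (x2 b * cnj (x2 b)) * (x3 c * cnj (x3 c)))"
    by (intro sum.cong refl hv) auto
  also have "\<dots> = (\<Sum>a<d1. x1 a * cnj (x1 a)) * (\<Sum>b<d2. x2 b * cnj (x2 b)) * (\<Sum>c<d3. x3 c * cnj (x3 c))"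
  proof -
    define F where "F a = x1 a * cnj (x1 a)" for a
    define G where "G b = x2 b * cnj (x2 b)" for b
    define H where "H c = x3 c * cnj (x3 c)" for c
    have "(\<Sum>a<d1. F a) * (\<Sum>b<d2. G b) * (\<Sum>c<d3. H c) = (\<Sum>a<d1. F a) * ((\<Sum>b<d2. G b) * (\<Sum>c<d3. H c))"
      by (rule mult.assoc)
    also have "(\<Sum>b<d2. G b) * (\<Sum>c<d3. H c) = (\<Sum>b<d2. \<Sum>c<d3. G b * H c)" by (rule sum_product)
    also have "(\<Sum>a<d1. F a) * (\<Sum>b<d2. \<Sum>c<d3. G b * H c) = (\<Sum>a<d1. \<Sum>b<d2. F a * (\<Sum>c<d3. G b * H c))"
      by (rule sum_product)
    also have "\<dots> = (\<Sum>a<d1. \<Sum>b<d2. \<Sum>c<d3. F a * G b * H c)" by (simp add: sum_distrib_left mult.assoc)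
    finally show ?thesis unfolding F_def G_def H_def by simp
  qed
  finally show ?thesis unfolding h_def .
qed

lemma vnorm_one: "vnorm d x = 1 \<Longrightarrow> (\<Sum>a<d. x a * cnj (x a)) = 1"
proof -
  assume "vnorm d x = 1"
  then have "(\<Sum>i<d. (cmod (x i))\<^sup>2) = 1" unfolding vnorm_def
    by (metis real_sqrt_eq_1_iff)
  then have "complex_of_real (\<Sum>i<d. (cmod (x i))\<^sup>2) = 1" by simp
  then show ?thesis by (simp only: of_real_sum complex_norm_square)
qed


lemma comp_lb[measurable]:
  "(\<lambda>x. x i) \<in> borel_measurable (PiM I (\<lambda>_. (lborel :: 'b::euclidean_space measure)))"
proof (cases "i \<in> I")
  case True
  have "(\<lambda>x. x i) \<in> measurable (PiM I (\<lambda>_. (lborel :: 'b measure))) lborel"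
    by (rule measurable_component_singleton[OF True])
  thus ?thesis by simp
next
  case False
  have "(\<lambda>x. undefined :: 'b) \<in> borel_measurable (PiM I (\<lambda>_. lborel))" by simp
  moreover have "\<And>x. x \<in> space (PiM I (\<lambda>_. (lborel :: 'b measure))) \<Longrightarrow> x i = undefined"
    using False by (auto simp: space_PiM PiE_def extensional_def)
  ultimately show ?thesis using measurable_cong by (smt (verit))
qed

lemma vnorm_meas_l[measurable]: "(\<lambda>x. vnorm d x) \<in> borel_measurable (PiM I (\<lambda>_. (lborel :: complex measure)))"
  unfolding vnorm_def by measurable

lemma vnorm_meas_b[measurable]: "(\<lambda>x. vnorm d x) \<in> borel_measurable (PiM I (\<lambda>_. (borel :: complex measure)))"
  unfolding vnorm_def by measurable

definition Mb :: "nat \<Rightarrow> (nat \<Rightarrow> complex) measure" where "Mb d = PiM {..<d} (\<lambda>_. lborel)"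
definition Ball1 :: "nat \<Rightarrow> (nat \<Rightarrow> complex) set" where "Ball1 d = {x \<in> space (Mb d). vnorm d x \<le> 1}"
definition Tn :: "nat \<Rightarrow> (nat \<Rightarrow> complex) \<Rightarrow> (nat \<Rightarrow> complex)" where
  "Tn d x = restrict (\<lambda>i. x i / complex_of_real (vnorm d x)) {..<d}"

lemma sphere_unif_alt: "sphere_unif d = distr (uniform_measure (Mb d) (Ball1 d)) (vec_space d) (Tn d)"
  unfolding sphere_unif_def Mb_def Ball1_def Tn_def ..

lemma Tn_meas: "Tn d \<in> measurable (Mb d) (vec_space d)"
  unfolding Tn_def vec_space_def Mb_def
  by (rule measurable_restrict) measurable

lemma Ball1_sets: "Ball1 d \<in> sets (Mb d)"
  unfolding Ball1_def Mb_def by measurable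

lemma sets_sphere: "sets (sphere_unif d) = sets (vec_space d)"
  unfolding sphere_unif_alt by simp

lemma vnorm_Tn: assumes "vnorm d x \<noteq> 0" shows "vnorm d (Tn d x) = 1"
proof -
  define S where "S = (\<Sum>i<d. (cmod (x i))\<^sup>2)"
  have S0: "S \<ge> 0" unfolding S_def by (intro sum_nonneg) auto
  have r: "vnorm d x = sqrt S" unfolding vnorm_def S_def ..
  have Sp: "S > 0" using assms S0 r by auto
  have "(\<Sum>i<d. (cmod (Tn d x i))\<^sup>2) = (\<Sum>i<d. (cmod (x i))\<^sup>2 / S)"
    by (intro sum.cong refl) (simp add: Tn_def r norm_divide power_divide S0)
  also have "\<dots> = 1" using Sp by (simp add: sum_divide_distrib[symmetric] S_def[symmetric])
  finally show ?thesis unfolding vnorm_def by simp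
qed

lemma ball_pos: "0 < r \<Longrightarrow> emeasure lborel (ball (0::complex) r) \<noteq> 0"
proof -
  assume "0 < r"
  have u: "unit_ball_vol 2 \<noteq> 0" using unit_ball_vol_pos[of 2] by linarith
  show ?thesis using \<open>0 < r\<close> u by (simp add: emeasure_ball)
qed

lemma sphere_props:
  assumes d: "0 < d"
  shows "prob_space (sphere_unif d)" "AE x in sphere_unif d. vnorm d x = 1"
proof -
  interpret PS: product_sigma_finite "\<lambda>_. (lborel :: complex measure)" by standard
  have fin: "emeasure (Mb d) (Ball1 d) \<noteq> \<infinity>"
  proof -
    have "Ball1 d \<subseteq> PiE {..<d} (\<lambda>_. cball 0 1)"
    proof
      fix x assume x: "x \<in> Ball1 d"
      then have sp: "x \<in> PiE {..<d} (\<lambda>_. UNIV)" unfolding Ball1_def Mb_def by (simp add: space_PiM)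
      { fix i assume i: "i < d"
        have "(cmod (x i))\<^sup>2 \<le> (\<Sum>i<d. (cmod (x i))\<^sup>2)" using i by (intro member_le_sum) auto
        also have "\<dots> \<le> 1" using x unfolding Ball1_def vnorm_def by (simp add: real_sqrt_le_1_iff)
        finally have "cmod (x i) \<le> 1" by (simp add: power_le_one_iff abs_le_iff)
      }
      then show "x \<in> PiE {..<d} (\<lambda>_. cball 0 1)" using sp by (auto simp: PiE_iff)
    qed
    then have "emeasure (Mb d) (Ball1 d) \<le> emeasure (Mb d) (PiE {..<d} (\<lambda>_. cball 0 1))"
      by (intro emeasure_mono) (auto simp: Mb_def)
    also have "\<dots> = (\<Prod>i<d. emeasure lborel (cball (0::complex) 1))"
      unfolding Mb_def by (rule PS.emeasure_PiM) auto
    also have "\<dots> < \<infinity>" using emeasure_lborel_cball_finite[of "0::complex" 1]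
      by (simp add: power_less_top_ennreal)
    finally show ?thesis by simp
  qed
  have pos: "emeasure (Mb d) (Ball1 d) \<noteq> 0"
  proof -
    define r where "r = 1 / real d"
    have r0: "r > 0" using d unfolding r_def by simp
    have "PiE {..<d} (\<lambda>_. ball 0 r) \<subseteq> Ball1 d"
    proof
      fix x assume x: "x \<in> PiE {..<d} (\<lambda>_. ball (0::complex) r)"
      have "(\<Sum>i<d. (cmod (x i))\<^sup>2) \<le> (\<Sum>i<d. r\<^sup>2)"
        using x r0 by (intro sum_mono power_mono) (auto simp: PiE_iff less_imp_le)
      also have "\<dots> = real d * r\<^sup>2" by simp
      also have "\<dots> \<le> 1" using d unfolding r_def by (simp add: power2_eq_square field_simps)
      finally have "vnorm d x \<le> 1" unfolding vnorm_def by simp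
      moreover have "x \<in> space (Mb d)" using x unfolding Mb_def by (auto simp: space_PiM PiE_iff)
      ultimately show "x \<in> Ball1 d" unfolding Ball1_def by simp
    qed
    then have "emeasure (Mb d) (PiE {..<d} (\<lambda>_. ball 0 r)) \<le> emeasure (Mb d) (Ball1 d)"
      by (intro emeasure_mono Ball1_sets)
    moreover have "emeasure (Mb d) (PiE {..<d} (\<lambda>_. ball 0 r)) = (\<Prod>i<d. emeasure lborel (ball (0::complex) r))"
      unfolding Mb_def by (rule PS.emeasure_PiM) auto
    moreover have "(\<Prod>i<d. emeasure lborel (ball (0::complex) r)) \<noteq> 0"
      using ball_pos[OF r0] by simp
    ultimately show ?thesis by (metis le_zero_eq)
  qed
  have pu: "prob_space (uniform_measure (Mb d) (Ball1 d))" by (rule prob_space_uniform_measure[OF pos fin])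
  have Tm: "Tn d \<in> measurable (uniform_measure (Mb d) (Ball1 d)) (vec_space d)"
    using Tn_meas by (simp add: measurable_cong_sets[OF sets_uniform_measure refl])
  show "prob_space (sphere_unif d)" unfolding sphere_unif_alt by (rule prob_space.prob_space_distr[OF pu Tm])
  have null: "AE x in Mb d. vnorm d x \<noteq> 0"
  proof (rule AE_I')
    show "PiE {..<d} (\<lambda>_. {0}) \<in> null_sets (Mb d)"
    proof -
      have s: "PiE {..<d} (\<lambda>_. {0::complex}) \<in> sets (Mb d)" unfolding Mb_def
        by (rule sets_PiM_I_finite) auto
      have "emeasure (Mb d) (PiE {..<d} (\<lambda>_. {0::complex})) = (\<Prod>i<d. emeasure lborel {0::complex})"
        unfolding Mb_def by (rule PS.emeasure_PiM) auto
      also have "\<dots> = 0" using d by simp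
      finally show ?thesis using s by auto
    qed
    show "{x \<in> space (Mb d). \<not> vnorm d x \<noteq> 0} \<subseteq> PiE {..<d} (\<lambda>_. {0})"
    proof
      fix x assume x: "x \<in> {x \<in> space (Mb d). \<not> vnorm d x \<noteq> 0}"
      then have "(\<Sum>i<d. (cmod (x i))\<^sup>2) = 0" unfolding vnorm_def by simp
      then have "\<forall>i\<in>{..<d}. (cmod (x i))\<^sup>2 = 0" by (subst (asm) sum_nonneg_eq_0_iff) auto
      then have z: "\<forall>i\<in>{..<d}. x i = 0" by simp
      have e: "x \<in> extensional {..<d}" using x unfolding Mb_def by (auto simp: space_PiM PiE_iff)
      have "x = (\<lambda>i\<in>{..<d}. 0)"
      proof
        fix i show "x i = (\<lambda>i\<in>{..<d}. 0) i" using z e by (cases "i < d") (auto simp: extensional_def)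
      qed
      then show "x \<in> PiE {..<d} (\<lambda>_. {0})" by simp
    qed
  qed
  have "AE x in uniform_measure (Mb d) (Ball1 d). vnorm d (Tn d x) = 1"
  proof (rule AE_uniform_measureI[OF Ball1_sets])
    show "AE x in Mb d. x \<in> Ball1 d \<longrightarrow> vnorm d (Tn d x) = 1"
      using null by eventually_elim (auto intro: vnorm_Tn)
  qed
  then show "AE x in sphere_unif d. vnorm d x = 1"
    unfolding sphere_unif_alt
    by (subst AE_distr_iff[OF Tm]) (auto simp: vec_space_def)
qed


lemma purity_meas[measurable]:
  assumes [measurable]: "\<And>m. (\<lambda>z. \<psi> z m) \<in> borel_measurable M"
  shows "(\<lambda>z. purity D A (\<psi> z)) \<in> borel_measurable M"
  unfolding purity_def Let_def by measurable

lemma one_tangle_meas: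
  assumes "\<And>m. (\<lambda>z. \<psi> z m) \<in> borel_measurable M"
  shows "(\<lambda>z. one_tangle D (\<psi> z)) \<in> borel_measurable M"
  unfolding one_tangle_def tangle_def using purity_meas[OF assms] by measurable

definition psi :: "nat \<Rightarrow> nat \<Rightarrow> nat \<Rightarrow> (((nat \<times> nat \<Rightarrow> complex) \<times> (nat \<Rightarrow> complex)) \<times> (nat \<Rightarrow> complex)) \<times> (nat \<Rightarrow> complex) \<Rightarrow> nat \<Rightarrow> complex" where
  "psi d1 d2 d3 p m = (\<Sum>k<d1*d2*d3. fst (fst (fst p)) (m,k) *
     (snd (fst (fst p)) (k div (d2*d3)) * snd (fst p) ((k div d3) mod d2) * snd p (k mod d3)))"

lemma psi_meas:
  "(\<lambda>p. psi d1 d2 d3 p m) \<in> borel_measurable (((mat_space n \<Otimes>\<^sub>M vec_space d1) \<Otimes>\<^sub>M vec_space d2) \<Otimes>\<^sub>M vec_space d3)"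
  unfolding psi_def mat_space_def vec_space_def by measurable

lemma psi_eq: "m < d1*d2*d3 \<Longrightarrow> mat_apply (d1*d2*d3) U (prod_vec3 (dims3 d1 d2 d3) x1 x2 x3) m = psi d1 d2 d3 (((U,x1),x2),x3) m"
  unfolding mat_apply_def psi_def prod_vec3_def
  by (auto simp: dims3_def mult_ac intro!: sum.cong)

lemma purity_cong:
  assumes A: "A \<subseteq> {0,1,2}" and e: "\<And>m. m < d1*d2*d3 \<Longrightarrow> \<psi> m = \<phi> m"
  shows "purity (dims3 d1 d2 d3) A \<psi> = purity (dims3 d1 d2 d3) A \<phi>"
proof -
  have fb: "\<And>a b. a \<in> idx_set (dims3 d1 d2 d3) A \<Longrightarrow> b \<in> idx_set (dims3 d1 d2 d3) ({0,1,2} - A) \<Longrightarrow>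
     flat_idx (dims3 d1 d2 d3) (merge_idx A a b) < d1*d2*d3"
    using fI_bound[OF A] unfolding fI_def by blast
  show ?thesis unfolding purity_expand
    by (intro arg_cong[where f=Re] sum.cong refl) (simp add: e fb)
qed

lemma one_tangle_cong:
  assumes e: "\<And>m. m < d1*d2*d3 \<Longrightarrow> \<psi> m = \<phi> m"
  shows "one_tangle (dims3 d1 d2 d3) \<psi> = one_tangle (dims3 d1 d2 d3) \<phi>"
  unfolding one_tangle_def tangle_def
  using purity_cong[OF _ e, of "{0,1}"] purity_cong[OF _ e, of "{0,2}"] purity_cong[OF _ e, of "{1,2}"]
  by simp

definition Gf where "Gf d1 d2 d3 p = one_tangle (dims3 d1 d2 d3) (psi d1 d2 d3 p)"

lemma Gf_meas: "Gf d1 d2 d3 \<in> borel_measurable (((mat_space n \<Otimes>\<^sub>M vec_space d1) \<Otimes>\<^sub>M vec_space d2) \<Otimes>\<^sub>M vec_space d3)"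
  unfolding Gf_def by (rule one_tangle_meas[OF psi_meas])

lemma Gf_eq: "Gf d1 d2 d3 (((U,x1),x2),x3) = one_tangle (dims3 d1 d2 d3) (mat_apply (d1*d2*d3) U (prod_vec3 (dims3 d1 d2 d3) x1 x2 x3))"
  unfolding Gf_def by (rule one_tangle_cong) (simp add: psi_eq)


lemma int_meas_swap:
  fixes h :: "_ \<Rightarrow> real"
  assumes "sigma_finite_measure M" "h \<in> borel_measurable (M \<Otimes>\<^sub>M N)"
  shows "(\<lambda>y. \<integral>x. h (x, y) \<partial>M) \<in> borel_measurable N"
proof -
  interpret sigma_finite_measure M by fact
  have "(\<lambda>(y, x). h (x, y)) \<in> borel_measurable (N \<Otimes>\<^sub>M M)"
    using measurable_compose[OF measurable_pair_swap' assms(2)] by (simp add: case_prod_beta)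
  then show ?thesis by (intro borel_measurable_lebesgue_integral) (simp add: case_prod_beta)
qed

lemma int_meas:
  fixes h :: "_ \<Rightarrow> real"
  assumes "sigma_finite_measure M" "h \<in> borel_measurable (N \<Otimes>\<^sub>M M)"
  shows "(\<lambda>y. \<integral>x. h (y, x) \<partial>M) \<in> borel_measurable N"
proof -
  interpret sigma_finite_measure M by fact
  show ?thesis using assms(2) by (intro borel_measurable_lebesgue_integral) (simp add: case_prod_beta)
qed

lemma fix_mid:
  assumes "x \<in> space B"
  shows "(\<lambda>z. ((fst z, x), snd z)) \<in> measurable (A \<Otimes>\<^sub>M C) ((A \<Otimes>\<^sub>M B) \<Otimes>\<^sub>M C)"
  using assms by measurable

lemma fix_mid2:
  assumes "x \<in> space B" "y \<in> space C"
  shows "(\<lambda>z. (((fst z, x), y), snd z)) \<in> measurable (A \<Otimes>\<^sub>M D) (((A \<Otimes>\<^sub>M B) \<Otimes>\<^sub>M C) \<Otimes>\<^sub>M D)"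
  using assms by measurable



theorem mainTheorem9:
  fixes d1 d2 d3 :: nat and \<mu> :: "(nat \<times> nat \<Rightarrow> complex) measure"
  assumes "d1 \<ge> 2" and "d2 \<ge> 2" and "d3 \<ge> 2"
    and "is_haar_unitary (d1 * d2 * d3) \<mu>"
  shows "(\<integral>U. entangling_power d1 d2 d3 U \<partial>\<mu>) =
    (3 * real (d1 * d2 * d3) + 3 - real d1 - real d2 - real d3
       - real (d1 * d2) - real (d1 * d3) - real (d2 * d3))
    / ((3 / 2) * (real (d1 * d2 * d3) + 1))"
proof -
  define n where "n = d1 * d2 * d3"
  define tgt where "tgt = (3 * real (d1 * d2 * d3) + 3 - real d1 - real d2 - real d3
       - real (d1 * d2) - real (d1 * d3) - real (d2 * d3))
    / ((3 / 2) * (real (d1 * d2 * d3) + 1))"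
  define C where "C = 2 + 2 * real n ^ 2"
  define S1 where "S1 = sphere_unif d1"
  define S2 where "S2 = sphere_unif d2"
  define S3 where "S3 = sphere_unif d3"
  have haar: "is_haar_unitary n \<mu>" using assms(4) unfolding n_def .
  have n2: "2 \<le> n" unfolding n_def using assms(1-3)
    by (metis le_trans mult_le_mono1 mult_2 le_add2 one_le_mult_iff nat_mult_le_cancel_disj)
  have pmu: "prob_space \<mu>" and smu: "sets \<mu> = sets (mat_space n)"
    using haar unfolding is_haar_unitary_def by auto
  interpret Pmu: prob_space \<mu> by (rule pmu)
  have p1: "prob_space S1" and ae1: "AE x in S1. vnorm d1 x = 1" unfolding S1_def using sphere_props assms by auto
  have p2: "prob_space S2" and ae2: "AE x in S2. vnorm d2 x = 1" unfolding S2_def using sphere_props assms by auto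
  have p3: "prob_space S3" and ae3: "AE x in S3. vnorm d3 x = 1" unfolding S3_def using sphere_props assms by auto
  interpret P1: prob_space S1 by (rule p1)
  interpret P2: prob_space S2 by (rule p2)
  interpret P3: prob_space S3 by (rule p3)
  have AEU: "AE U in \<mu>. U \<in> unitary_set n"
  proof -
    have e: "emeasure \<mu> (unitary_set n) = 1" using haar unfolding is_haar_unitary_def by auto
    then have s: "unitary_set n \<in> sets \<mu>" using emeasure_notin_sets by force
    then show ?thesis using e Pmu.AE_in_set_eq_1[OF s] by (simp add: Pmu.emeasure_eq_measure)
  qed
  have Uspace: "U \<in> space \<mu>" if "U \<in> unitary_set n" for U
    using that sets_eq_imp_space_eq[OF smu] unfolding unitary_set_def mat_space_def
    by (auto simp: space_PiM PiE_def)
  have s1: "sets S1 = sets (vec_space d1)" "sets S2 = sets (vec_space d2)" "sets S3 = sets (vec_space d3)"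
    unfolding S1_def S2_def S3_def by (simp_all add: sets_sphere)
  define G where "G = Gf d1 d2 d3"
  have Gm: "G \<in> borel_measurable (((\<mu> \<Otimes>\<^sub>M S1) \<Otimes>\<^sub>M S2) \<Otimes>\<^sub>M S3)"
  proof -
    have "sets (((\<mu> \<Otimes>\<^sub>M S1) \<Otimes>\<^sub>M S2) \<Otimes>\<^sub>M S3) = sets (((mat_space n \<Otimes>\<^sub>M vec_space d1) \<Otimes>\<^sub>M vec_space d2) \<Otimes>\<^sub>M vec_space d3)"
      by (intro sets_pair_measure_cong smu s1)
    then show ?thesis unfolding G_def using Gf_meas measurable_cong_sets by blast
  qed
  define G3 where "G3 q = (\<integral>x3. G (q, x3) \<partial>S3)" for q
  define G2 where "G2 q = (\<integral>x2. G3 (q, x2) \<partial>S2)" for q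
  have G3m: "G3 \<in> borel_measurable ((\<mu> \<Otimes>\<^sub>M S1) \<Otimes>\<^sub>M S2)"
    unfolding G3_def by (rule int_meas[OF _ Gm]) unfold_locales
  have G2m: "G2 \<in> borel_measurable (\<mu> \<Otimes>\<^sub>M S1)"
    unfolding G2_def by (rule int_meas[OF _ G3m]) unfold_locales
  have unitv: "(\<Sum>k<n. prod_vec3 (dims3 d1 d2 d3) x1 x2 x3 k * cnj (prod_vec3 (dims3 d1 d2 d3) x1 x2 x3 k)) = 1"
    if "vnorm d1 x1 = 1" "vnorm d2 x2 = 1" "vnorm d3 x3 = 1" for x1 x2 x3
    unfolding n_def using prod_norm[of d2 d3 d1 x1 x2 x3] assms vnorm_one[OF that(1)] vnorm_one[OF that(2)] vnorm_one[OF that(3)]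
    by simp
  have Gb: "\<bar>G (((U,x1),x2),x3)\<bar> \<le> C"
    if "U \<in> unitary_set n" "vnorm d1 x1 = 1" "vnorm d2 x2 = 1" "vnorm d3 x3 = 1" for U x1 x2 x3
    unfolding G_def Gf_eq C_def n_def[symmetric]
    by (rule tangle_bound[OF that(1) unitv[OF that(2-4)] n_def])
  have G3b: "norm (G3 ((U,x1),x2)) \<le> C"
    if "U \<in> unitary_set n" "x1 \<in> space S1" "x2 \<in> space S2" "vnorm d1 x1 = 1" "vnorm d2 x2 = 1" for U x1 x2
    unfolding G3_def
  proof (rule Lbound[OF p3])
    show "AE x in S3. norm (G (((U, x1), x2), x)) \<le> C" using ae3 by eventually_elim (use Gb that in auto)
    have "((U,x1),x2) \<in> space ((\<mu> \<Otimes>\<^sub>M S1) \<Otimes>\<^sub>M S2)" using that Uspace by (simp add: space_pair_measure)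
    then show "(\<lambda>x. G (((U, x1), x2), x)) \<in> borel_measurable S3"
      using measurable_compose[OF measurable_Pair1' Gm] by blast
  qed
  have G2b: "norm (G2 (U,x1)) \<le> C"
    if "U \<in> unitary_set n" "x1 \<in> space S1" "vnorm d1 x1 = 1" for U x1
    unfolding G2_def
  proof (rule Lbound[OF p2])
    show "AE x in S2. norm (G3 ((U, x1), x)) \<le> C" using ae2 AE_space[of S2] by eventually_elim (use G3b that in auto)
    have "(U,x1) \<in> space (\<mu> \<Otimes>\<^sub>M S1)" using that Uspace by (simp add: space_pair_measure)
    then show "(\<lambda>x. G3 ((U, x1), x)) \<in> borel_measurable S2"
      using measurable_compose[OF measurable_Pair1' G3m] by blast
  qed
  have tgt_eq: "tgt = (3 * real (d1 * d2 * d3) + 3 - real d1 - real d2 - real d3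
       - real (d1 * d2) - real (d1 * d3) - real (d2 * d3))
    / ((3 / 2) * (real (d1 * d2 * d3) + 1))" by (rule tgt_def)
  have core: "(\<integral>U. G (((U,x1),x2),x3) \<partial>\<mu>) = tgt"
    if "vnorm d1 x1 = 1" "vnorm d2 x2 = 1" "vnorm d3 x3 = 1" for x1 x2 x3
  proof -
    interpret H: hs n \<mu> "prod_vec3 (dims3 d1 d2 d3) x1 x2 x3"
      by unfold_locales (use haar n2 unitv[OF that] in auto)
    show ?thesis using H.E_tangle[OF n_def] unfolding G_def Gf_eq tgt_def n_def by simp
  qed
  have lvl3: "(\<integral>U. G3 ((U,x1),x2) \<partial>\<mu>) = tgt"
    if "x1 \<in> space S1" "x2 \<in> space S2" "vnorm d1 x1 = 1" "vnorm d2 x2 = 1" for x1 x2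
  proof -
    have "(\<integral>U. G3 ((U,x1),x2) \<partial>\<mu>) = (\<integral>U. (\<integral>x3. G (((U,x1),x2),x3) \<partial>S3) \<partial>\<mu>)" unfolding G3_def ..
    also have "\<dots> = (\<integral>x3. (\<integral>U. G (((U,x1),x2),x3) \<partial>\<mu>) \<partial>S3)"
    proof (rule Lswap[OF pmu p3])
      show "(\<lambda>(U, x3). G (((U, x1), x2), x3)) \<in> borel_measurable (\<mu> \<Otimes>\<^sub>M S3)"
        using measurable_compose[OF fix_mid2[OF that(1,2), of \<mu> S3] Gm] by (simp add: case_prod_beta)
      show "AE U in \<mu>. AE x3 in S3. norm (G (((U, x1), x2), x3)) \<le> C"
        using AEU
      proof eventually_elim
        case (elim U) show ?case using ae3 by eventually_elim (use Gb that elim in auto)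
      qed
    qed
    also have "\<dots> = (\<integral>x3. tgt \<partial>S3)"
    proof (rule integral_cong_AE)
      show "(\<lambda>x3. \<integral>U. G (((U, x1), x2), x3) \<partial>\<mu>) \<in> borel_measurable S3"
        using int_meas_swap[OF _ measurable_compose[OF fix_mid2[OF that(1,2), of \<mu> S3] Gm]]
        by (simp add: Pmu.sigma_finite_measure_axioms)
      show "AE x3 in S3. (\<integral>U. G (((U, x1), x2), x3) \<partial>\<mu>) = tgt"
        using ae3 by eventually_elim (use core that in auto)
    qed simp
    also have "\<dots> = tgt" by (simp add: P3.prob_space)
    finally show ?thesis .
  qed
  have lvl2: "(\<integral>U. G2 (U,x1) \<partial>\<mu>) = tgt"
    if "x1 \<in> space S1" "vnorm d1 x1 = 1" for x1
  proof -
    have "(\<integral>U. G2 (U,x1) \<partial>\<mu>) = (\<integral>U. (\<integral>x2. G3 ((U,x1),x2) \<partial>S2) \<partial>\<mu>)" unfolding G2_def ..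
    also have "\<dots> = (\<integral>x2. (\<integral>U. G3 ((U,x1),x2) \<partial>\<mu>) \<partial>S2)"
    proof (rule Lswap[OF pmu p2])
      show "(\<lambda>(U, x2). G3 ((U, x1), x2)) \<in> borel_measurable (\<mu> \<Otimes>\<^sub>M S2)"
        using measurable_compose[OF fix_mid[OF that(1), of \<mu> S2] G3m] by (simp add: case_prod_beta)
      show "AE U in \<mu>. AE x2 in S2. norm (G3 ((U, x1), x2)) \<le> C"
        using AEU
      proof eventually_elim
        case (elim U) show ?case using ae2 AE_space[of S2] by eventually_elim (use G3b that elim in auto)
      qed
    qed
    also have "\<dots> = (\<integral>x2. tgt \<partial>S2)"
    proof (rule integral_cong_AE)
      show "(\<lambda>x2. \<integral>U. G3 ((U, x1), x2) \<partial>\<mu>) \<in> borel_measurable S2"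
        using int_meas_swap[OF _ measurable_compose[OF fix_mid[OF that(1), of \<mu> S2] G3m]]
        by (simp add: Pmu.sigma_finite_measure_axioms)
      show "AE x2 in S2. (\<integral>U. G3 ((U, x1), x2) \<partial>\<mu>) = tgt"
        using ae2 AE_space[of S2] by eventually_elim (use lvl3 that in auto)
    qed simp
    also have "\<dots> = tgt" by (simp add: P2.prob_space)
    finally show ?thesis .
  qed
  have "(\<integral>U. entangling_power d1 d2 d3 U \<partial>\<mu>) = (\<integral>U. (\<integral>x1. G2 (U,x1) \<partial>S1) \<partial>\<mu>)"
    unfolding entangling_power_def G2_def G3_def G_def Gf_eq S1_def S2_def S3_def ..
  also have "\<dots> = (\<integral>x1. (\<integral>U. G2 (U,x1) \<partial>\<mu>) \<partial>S1)"
  proof (rule Lswap[OF pmu p1])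
    show "(\<lambda>(U, x1). G2 (U, x1)) \<in> borel_measurable (\<mu> \<Otimes>\<^sub>M S1)" using G2m by (simp add: case_prod_beta)
    show "AE U in \<mu>. AE x1 in S1. norm (G2 (U, x1)) \<le> C"
      using AEU
    proof eventually_elim
      case (elim U) show ?case using ae1 AE_space[of S1] by eventually_elim (use G2b elim in auto)
    qed
  qed
  also have "\<dots> = (\<integral>x1. tgt \<partial>S1)"
  proof (rule integral_cong_AE)
    show "(\<lambda>x1. \<integral>U. G2 (U, x1) \<partial>\<mu>) \<in> borel_measurable S1"
      using int_meas_swap[OF _ G2m] by (simp add: Pmu.sigma_finite_measure_axioms)
    show "AE x1 in S1. (\<integral>U. G2 (U, x1) \<partial>\<mu>) = tgt"
      using ae1 AE_space[of S1] by eventually_elim (use lvl2 in auto)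
  qed simp
  also have "\<dots> = tgt" by (simp add: P1.prob_space)
  finally show ?thesis unfolding tgt_def .
qed


end
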